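(* Let $n>(p+s)^4$ be an integer. For any $j \in \{1,2,\ldots,p-1\}$, \[ S_{j/p} = \rho_{0,j/p} + \sum_{i=2}^{p-1+s} \rho_i \cdot \omega\left(\frac{j}{p}\right)^{1-i}\zeta_p\left(i,\frac{j}{p}\right), \] where $\rho_i:=\sum_{k=1}^n r_{i,k}$ for $2\leqslant i\leqslant p-1+s$ (independent of $j$) and \[\rho_{0,j/p}:=-\sum_{i=1}^{p-1+s}\sum_{k=1}^n\sum_{\nu=0}^{k-1} \frac{r_{i,k}}{\left(\nu+\frac{j}{p}\right)^{i}}.\]
   Context: Let $p\geqslant 5$ be a prime and $s$ a positive integer. Write $v_p$ for the $p$-adic valuation and $(\alpha)_k=\alpha(\alpha+1)\cdots(\alpha+k-1)$. Put $N_0=v_p(p-1+s)$ and $M_0=p^{2+N_0}s-1$. For an integer $n>(p+s)^4$ let \[R_n(t)=p^{pn}\, n!^s\, t^{M_0}\,\frac{\prod_{j=1}^{p-1}(t+\frac{j}{p})_n}{(t)_{n+1}^{p-1+s}}\in\mathbb{Q}(t),\] with partial fraction decomposition $R_n(t)=\sum_{i=1}^{p-1+s}\sum_{k=1}^{n} r_{i,k}(t+k)^{-i}$, $r_{i,k}\in\mathbb{Q}$. Let $\omega$ be the Teichmüller character on $\mathbb{Z}_p^\times$ (projection in $\mathbb{Z}_p^\times\cong\mu_{p-1}(\mathbb{Z}_p)\times(1+p\mathbb{Z}_p)$), extended to $\mathbb{Q}_p^\times$ by $\omega(x)=p^{v_p(x)}\omega(x/p^{v_p(x)})$, and $\langle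 x\rangle=x/\omega(x)$; $\log_p$ is the $p$-adic logarithm $\log_p(1+x)=\sum_{m\geqslant1}(-1)^{m-1}x^m/m$, $|x|_p<1$. Define \[\widetilde{R}_n(t) = \sum_{k=1}^{n} r_{1,k}\log_p\langle t + k\rangle + \sum_{i=2}^{p-1+s}\sum_{k=1}^{n} \frac{r_{i,k}}{(1-i)(t+k)^{i-1}}.\] The Volkenborn integral of $f:\mathbb{Z}_p\to\mathbb{Q}_p$ is $\int_{\mathbb{Z}_p}f(t)\,\mathrm{d}t=\lim_{m\to\infty}p^{-m}\sum_{0\leqslant k<p^m}f(k)$ when the limit exists. Set $S_{j/p}:=-\int_{\mathbb{Z}_p}\widetilde{R}_n(t+\frac{j}{p})\,\mathrm{d}t$. For $x\in\mathbb{Q}_p$ with $|x|_p>1$ and an integer $i\geqslant2$, the $p$-adic Hurwitz zeta value is $\zeta_p(i,x)=\frac{1}{i-1}\int_{\mathbb{Z}_p}\langle t+x\rangle^{1-i}\,\mathrm{d}t$. *)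

theory Defs
  imports Complex_Main "HOL-Computational_Algebra.Primes"
begin

definition pval :: "nat \<Rightarrow> rat \<Rightarrow> int" where
  "pval p x = (case quotient_of x of (a, b) \<Rightarrow>
      int (multiplicity (int p) a) - int (multiplicity (int p) b))"

definition pabs :: "nat \<Rightarrow> rat \<Rightarrow> real" where
  "pabs p x = (if x = 0 then 0 else real p powr (- real_of_int (pval p x)))"

text \<open>Elements of Q_p are represented by p-adically Cauchy sequences of rationals.\<close>
type_synonym padic = "nat \<Rightarrow> rat"

definition padic_cauchy :: "nat \<Rightarrow> padic \<Rightarrow> bool" where
  "padic_cauchy p X \<longleftrightarrow> (\<forall>e>0. \<exists>M. \<forall>m\<ge>M. \<forall>k\<ge>M. pabs p (X m - X k) < e)"

definition padic_norm :: "nat \<Rightarrow> padic \<Rightarrow> real" where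
  "padic_norm p X = lim (\<lambda>N. pabs p (X N))"

definition padic_eq :: "nat \<Rightarrow> padic \<Rightarrow> padic \<Rightarrow> bool" where
  "padic_eq p X Y \<longleftrightarrow> padic_cauchy p X \<and> padic_cauchy p Y \<and>
      (\<lambda>N. pabs p (X N - Y N)) \<longlonglongrightarrow> 0"

definition padic_lim :: "nat \<Rightarrow> (nat \<Rightarrow> padic) \<Rightarrow> padic \<Rightarrow> bool" where
  "padic_lim p F L \<longleftrightarrow> padic_cauchy p L \<and> (\<forall>m. padic_cauchy p (F m)) \<and>
      (\<lambda>m. padic_norm p (\<lambda>N. F m N - L N)) \<longlonglongrightarrow> 0"

definition punit :: "nat \<Rightarrow> rat \<Rightarrow> rat" where
  "punit p x = x * (of_nat p) powi (- pval p x)"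

text \<open>Teichmueller character omega(x) = p^(v_p x) omega(unit part); omega(u) = lim u^(p^N).\<close>
definition omega :: "nat \<Rightarrow> rat \<Rightarrow> padic" where
  "omega p x = (\<lambda>N. (of_nat p) powi (pval p x) * (punit p x) ^ (p ^ N))"

definition pangle :: "nat \<Rightarrow> rat \<Rightarrow> padic" where
  "pangle p x = (\<lambda>N. x / omega p x N)"

definition plog :: "nat \<Rightarrow> padic \<Rightarrow> padic" where
  "plog p Y = (\<lambda>N. \<Sum>m=1..N. (-1) ^ (m - 1) * (Y N - 1) ^ m / of_nat m)"

definition volkenborn :: "nat \<Rightarrow> (nat \<Rightarrow> padic) \<Rightarrow> padic \<Rightarrow> bool" where
  "volkenborn p f I \<longleftrightarrow>
     padic_lim p (\<lambda>m N. (\<Sum>k<p ^ m. f k N) / of_nat p ^ m) I"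

definition padic_hurwitz_zeta :: "nat \<Rightarrow> nat \<Rightarrow> rat \<Rightarrow> padic \<Rightarrow> bool" where
  "padic_hurwitz_zeta p i x Z \<longleftrightarrow>
     (\<exists>I. volkenborn p (\<lambda>k N. (pangle p (of_nat k + x) N) powi (1 - int i)) I \<and>
          padic_eq p Z (\<lambda>N. I N / (of_nat i - 1)))"

definition N0 :: "nat \<Rightarrow> nat \<Rightarrow> nat" where
  "N0 p s = multiplicity p (p - 1 + s)"

definition M0 :: "nat \<Rightarrow> nat \<Rightarrow> nat" where
  "M0 p s = p ^ (2 + N0 p s) * s - 1"

definition Rn :: "nat \<Rightarrow> nat \<Rightarrow> nat \<Rightarrow> rat \<Rightarrow> rat" where
  "Rn p s n t = (of_nat p) ^ (p * n) * (fact n) ^ s * t ^ M0 p s *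
     (\<Prod>j=1..p-1. pochhammer (t + of_nat j / of_nat p) n) /
     (pochhammer t (n + 1)) ^ (p - 1 + s)"

definition Rtilde :: "nat \<Rightarrow> nat \<Rightarrow> nat \<Rightarrow> (nat \<Rightarrow> nat \<Rightarrow> rat) \<Rightarrow> rat \<Rightarrow> padic" where
  "Rtilde p s n r t = (\<lambda>N.
     (\<Sum>k=1..n. r 1 k * plog p (pangle p (t + of_nat k)) N) +
     (\<Sum>i=2..p-1+s. \<Sum>k=1..n. r i k / ((1 - of_nat i) * (t + of_nat k) ^ (i - 1))))"

end

theory Submission
  imports Defs "HOL-Number_Theory.Residues"
begin

definition Dp :: "nat \<Rightarrow> int \<Rightarrow> rat \<Rightarrow> bool" where
  "Dp p e q \<longleftrightarrow> (\<exists>a b. \<not> int p dvd b \<and> q = of_int a / of_int b * of_nat p powi e)"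

context
  fixes p :: nat
  assumes pp: "prime p"
begin

lemma p_pos: "(of_nat p :: rat) \<noteq> 0" using pp by (simp add: prime_gt_0_nat)

lemma Dp_zero[simp]: "Dp p e 0"
  unfolding Dp_def by (rule exI[of _ 0], rule exI[of _ 1]) (use pp in \<open>auto simp: prime_int_iff\<close>)

lemma Dp_mult: "Dp p e a \<Longrightarrow> Dp p f b \<Longrightarrow> Dp p (e+f) (a*b)"
proof -
  assume "Dp p e a" "Dp p f b"
  then obtain a1 a2 b1 b2 where A: "\<not> int p dvd a2" "a = of_int a1 / of_int a2 * of_nat p powi e"
    and B: "\<not> int p dvd b2" "b = of_int b1 / of_int b2 * of_nat p powi f"
    unfolding Dp_def by blast
  have "\<not> int p dvd a2 * b2" using A B pp
    by (metis prime_dvd_mult_iff prime_nat_int_transfer)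
  moreover have "a * b = of_int (a1*b1) / of_int (a2*b2) * of_nat p powi (e+f)"
    using A B p_pos by (simp add: power_int_add)
  ultimately show ?thesis unfolding Dp_def by blast
qed

lemma Dp_add: "Dp p e a \<Longrightarrow> Dp p e b \<Longrightarrow> Dp p e (a+b)"
proof -
  assume "Dp p e a" "Dp p e b"
  then obtain a1 a2 b1 b2 where A: "\<not> int p dvd a2" "a = of_int a1 / of_int a2 * of_nat p powi e"
    and B: "\<not> int p dvd b2" "b = of_int b1 / of_int b2 * of_nat p powi e"
    unfolding Dp_def by blast
  have "\<not> int p dvd a2 * b2" using A B pp
    by (metis prime_dvd_mult_iff prime_nat_int_transfer)
  moreover have "a2 \<noteq> 0" "b2 \<noteq> 0" using A B by auto
  moreover have "a + b = of_int (a1*b2 + b1*a2) / of_int (a2*b2) * of_nat p powi e"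
    using calculation by (simp only: A(2) B(2)) (simp add: field_simps)
  ultimately show ?thesis unfolding Dp_def by blast
qed

lemma Dp_uminus: "Dp p e a \<Longrightarrow> Dp p e (-a)"
  unfolding Dp_def by (metis minus_divide_left minus_mult_left of_int_minus)

lemma Dp_diff: "Dp p e a \<Longrightarrow> Dp p e b \<Longrightarrow> Dp p e (a-b)"
  using Dp_add[of e a "-b"] Dp_uminus by simp

lemma Dp_mono: "e' \<le> e \<Longrightarrow> Dp p e a \<Longrightarrow> Dp p e' a"
proof -
  assume le: "e' \<le> e" and "Dp p e a"
  then obtain a1 a2 where A: "\<not> int p dvd a2" "a = of_int a1 / of_int a2 * of_nat p powi e"
    unfolding Dp_def by blast
  have "(of_nat p :: rat) powi e = of_nat p powi (e - e') * of_nat p powi e'"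
    using p_pos by (simp add: power_int_add[symmetric])
  also have "(of_nat p :: rat) powi (e - e') = of_int (int p ^ nat (e - e'))"
    using le by (simp add: power_int_def)
  finally have "a = of_int (a1 * int p ^ nat (e - e')) / of_int a2 * of_nat p powi e'"
    using A by simp
  with A show ?thesis unfolding Dp_def by blast
qed

lemma Dp_int: "Dp p 0 (of_int z)"
  unfolding Dp_def by (rule exI[of _ z], rule exI[of _ 1]) (use pp in \<open>auto simp: prime_int_iff\<close>)

lemma Dp_nat: "Dp p 0 (of_nat z)"
  using Dp_int[of "int z"] by simp

lemma Dp_ppow: "Dp p e (of_nat p powi e)"
  unfolding Dp_def by (rule exI[of _ 1], rule exI[of _ 1]) (use pp in \<open>auto simp: prime_int_iff\<close>)

lemma Dp_inv_unit: "\<not> int p dvd z \<Longrightarrow> Dp p 0 (1 / of_int z)"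
  unfolding Dp_def by (rule exI[of _ 1], rule exI[of _ z]) auto

lemma Dp_int_dvd: "int p ^ e dvd z \<Longrightarrow> Dp p (int e) (of_int z)"
proof -
  assume "int p ^ e dvd z"
  then obtain c where "z = int p ^ e * c" by (auto elim: dvdE)
  then have "of_int z = (of_int c :: rat) * of_nat p powi int e" by simp
  then show ?thesis using Dp_mult[OF Dp_int[of c] Dp_ppow[of "int e"]] by simp
qed

lemma Dp_sum: "finite A \<Longrightarrow> (\<And>x. x \<in> A \<Longrightarrow> Dp p e (f x)) \<Longrightarrow> Dp p e (\<Sum>x\<in>A. f x)"
  by (induction A rule: finite_induct) (auto intro: Dp_add)

lemma Dp_pow: "Dp p e a \<Longrightarrow> Dp p (int n * e) (a ^ n)"
proof (induction n)
  case 0 then show ?case using Dp_int[of 1] by simp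
next
  case (Suc n) then show ?case using Dp_mult[of e a "int n * e" "a^n"] by (simp add: algebra_simps)
qed

end

context
  fixes p :: nat
  assumes pp: "prime p"
begin
lemma Dp_exists: "\<exists>e. Dp p e q"
proof -
  obtain a b where ab: "quotient_of q = (a, b)" by (cases "quotient_of q")
  then have q: "q = of_int a / of_int b" and "b > 0" using quotient_of_div quotient_of_denom_pos by auto
  obtain b' where b': "b = int p ^ multiplicity (int p) b * b'" "\<not> int p dvd b'"
    using multiplicity_decompose'[of b "int p"] \<open>b > 0\<close> pp
    by (metis less_irrefl not_prime_unit prime_nat_int_transfer)
  have "q = of_int a / of_int b' * of_nat p powi (- int (multiplicity (int p) b))"
    apply (subst q, subst b'(1)) using p_pos[OF pp] by (simp add: power_int_minus field_simps)
  then show ?thesis using b' unfolding Dp_def by blast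
qed

lemma Dp_div_ppow: "Dp p e a \<Longrightarrow> Dp p (e - int m) (a / of_nat p ^ m)"
proof -
  assume "Dp p e a"
  moreover have "Dp p (- int m) (1 / of_nat p ^ m)"
    using Dp_ppow[OF pp, of "- int m"] by (simp add: power_int_minus divide_inverse)
  ultimately show ?thesis using Dp_mult[OF pp, of e a "- int m" "1 / of_nat p ^ m"] by (simp add: divide_inverse)
qed
end

context
  fixes p :: nat
  assumes pp: "prime p"
begin

lemma pint: "prime (int p)" using pp by simp

lemma mult_int_mul: "x \<noteq> 0 \<Longrightarrow> y \<noteq> 0 \<Longrightarrow> multiplicity (int p) (x * y) = multiplicity (int p) x + multiplicity (int p) y"
  using prime_elem_multiplicity_mult_distrib[of "int p" x y] pint by simp

lemma mult_unit0: "\<not> int p dvd u \<Longrightarrow> multiplicity (int p) u = 0"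
  by (simp add: not_dvd_imp_multiplicity_0)

lemma mult_ppow: "multiplicity (int p) (int p ^ k) = k"
  using pint by (simp add: prime_imp_prime_elem)

lemma pval_rep:
  assumes u: "\<not> int p dvd u" and w: "\<not> int p dvd w" and q: "q = of_int u / of_int w * of_nat p powi v"
  shows "pval p q = v"
proof -
  obtain a b where ab: "quotient_of q = (a, b)" by (cases "quotient_of q")
  then have qa: "q = of_int a / of_int b" and b0: "b > 0" using quotient_of_div quotient_of_denom_pos by auto
  have u0: "u \<noteq> 0" and w0: "w \<noteq> 0" using u w by auto
  have pv: "pval p q = int (multiplicity (int p) a) - int (multiplicity (int p) b)"
    unfolding pval_def ab by simp
  have pn: "(of_nat p :: rat) \<noteq> 0" using p_pos[OF pp] .
  have qnz: "q \<noteq> 0" using q u0 w0 pn by simp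
  then have a0: "a \<noteq> 0" using qa by auto
  show ?thesis
  proof (cases "v \<ge> 0")
    case True
    then have "q = of_int (u * int p ^ nat v) / of_int w" using q by (simp add: power_int_def)
    then have "of_int (u * int p ^ nat v * b) = (of_int (a * w) :: rat)"
      using qa b0 w0 by (simp add: field_simps)
    then have E: "u * int p ^ nat v * b = a * w" by (simp only: of_int_eq_iff)
    have "multiplicity (int p) (u * int p ^ nat v * b) = nat v + multiplicity (int p) b"
      using u0 b0 pn by (simp add: mult_int_mul mult_unit0[OF u] mult_ppow)
    moreover have "multiplicity (int p) (a * w) = multiplicity (int p) a"
      using a0 w0 by (simp add: mult_int_mul mult_unit0[OF w])
    ultimately show ?thesis using E pv True by simp
  next
    case False
    then have "q = of_int u / of_int (w * int p ^ nat (-v))" using q pn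
      by (simp add: power_int_def field_simps)
    then have "of_int (u * b) = (of_int (a * (w * int p ^ nat (-v))) :: rat)"
      using qa b0 w0 pn by (simp add: field_simps)
    then have E: "u * b = a * (w * int p ^ nat (-v))" by (simp only: of_int_eq_iff)
    have "multiplicity (int p) (u * b) = multiplicity (int p) b"
      using u0 b0 by (simp add: mult_int_mul mult_unit0[OF u])
    moreover have "multiplicity (int p) (a * (w * int p ^ nat (-v))) = multiplicity (int p) a + nat (-v)"
      using a0 w0 pn by (simp add: mult_int_mul mult_unit0[OF w] mult_ppow)
    ultimately show ?thesis using E pv False by simp
  qed
qed

lemma rep_exists:
  fixes q :: rat
  assumes "q \<noteq> 0"
  shows "\<exists>u w v. \<not> int p dvd u \<and> \<not> int p dvd w \<and> q = of_int u / of_int w * of_nat p powi v"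
proof -
  obtain e a b where A: "\<not> int p dvd b" "q = of_int a / of_int b * of_nat p powi e"
    using Dp_exists[OF pp, of q] unfolding Dp_def by blast
  have "a \<noteq> 0" using A assms by auto
  then obtain a' where a': "a = int p ^ multiplicity (int p) a * a'" "\<not> int p dvd a'"
    using multiplicity_decompose'[of a "int p"] pint by (metis not_prime_unit)
  have "q = of_int a' / of_int b * of_nat p powi (e + int (multiplicity (int p) a))"
    apply (subst A(2), subst a'(1)) using p_pos[OF pp] by (simp add: power_int_add)
  then show ?thesis using A a' by blast
qed

lemma Dp_pval: assumes "Dp p e q" "q \<noteq> 0" shows "pval p q \<ge> e"
proof -
  obtain a b where A: "\<not> int p dvd b" "q = of_int a / of_int b * of_nat p powi e"
    using assms unfolding Dp_def by blast
  have "a \<noteq> 0" using A assms by auto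
  then obtain a' where a': "a = int p ^ multiplicity (int p) a * a'" "\<not> int p dvd a'"
    using multiplicity_decompose'[of a "int p"] pint by (metis not_prime_unit)
  have "q = of_int a' / of_int b * of_nat p powi (e + int (multiplicity (int p) a))"
    apply (subst A(2), subst a'(1)) using p_pos[OF pp] by (simp add: power_int_add)
  then have "pval p q = e + int (multiplicity (int p) a)" using pval_rep A a' by blast
  then show ?thesis by simp
qed

lemma Dp_pabs: assumes "Dp p e q" shows "pabs p q \<le> real p powr (- real_of_int e)"
proof (cases "q = 0")
  case True then show ?thesis by (simp add: pabs_def)
next
  case False
  have "pval p q \<ge> e" using Dp_pval assms False by blast
  moreover have "real p > 1" using pp prime_gt_1_nat by auto
  ultimately show ?thesis using False unfolding pabs_def by (simp add: powr_mono)
qed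

lemma pval_perturb:
  assumes u: "\<not> int p dvd u" and w: "\<not> int p dvd w" and q: "q = of_int u / of_int w * of_nat p powi v"
    and d: "Dp p (v+1) (q' - q)"
  shows "pval p q' = v \<and> q' \<noteq> 0"
proof -
  obtain c1 c2 where C: "\<not> int p dvd c2" "q' - q = of_int c1 / of_int c2 * of_nat p powi (v+1)"
    using d unfolding Dp_def by blast
  have pn: "(of_nat p :: rat) \<noteq> 0" using p_pos[OF pp] .
  have w0: "w \<noteq> 0" and c0: "c2 \<noteq> 0" using w C by auto
  have "q' = q + (q' - q)" by simp
  also have "\<dots> = of_int (u * c2 + int p * c1 * w) / of_int (w * c2) * of_nat p powi v"
    apply (subst C(2), subst q) using pn w0 c0 by (simp add: power_int_add field_simps)
  finally have q': "q' = \<dots>" .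
  have n1: "\<not> int p dvd u * c2 + int p * c1 * w"
  proof
    assume "int p dvd u * c2 + int p * c1 * w"
    then have "int p dvd u * c2" by (simp add: dvd_add_left_iff mult.assoc)
    then show False using u C(1) pint by (simp add: prime_dvd_mult_iff)
  qed
  have n2: "\<not> int p dvd w * c2" using w C(1) pint by (simp add: prime_dvd_mult_iff)
  have "pval p q' = v" using pval_rep[OF n1 n2 q'] .
  moreover have "u * c2 + int p * c1 * w \<noteq> 0" using n1 by auto
  then have "q' \<noteq> 0" using q' pn w0 c0 by (simp del: of_int_add of_int_mult)
  ultimately show ?thesis by blast
qed

end

definition pc :: "nat \<Rightarrow> (nat \<Rightarrow> rat) \<Rightarrow> bool" where
  "pc p X \<longleftrightarrow> (\<forall>E. \<exists>M. \<forall>m\<ge>M. \<forall>k\<ge>M. Dp p E (X m - X k))"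

definition pnull :: "nat \<Rightarrow> (nat \<Rightarrow> rat) \<Rightarrow> bool" where
  "pnull p X \<longleftrightarrow> (\<forall>E. \<exists>M. \<forall>m\<ge>M. Dp p E (X m))"

context
  fixes p :: nat
  assumes pp: "prime p"
begin

lemma p_gt1: "real p > 1" using pp prime_gt_1_nat by auto

lemma small_pow: assumes "(e::real) > 0" shows "\<exists>E::int. real p powr (- real_of_int E) < e"
proof -
  have "1 / real p < 1" "1 / real p > 0" using p_gt1 by auto
  then obtain n where "(1 / real p) ^ n < e" using real_arch_pow_inv assms by blast
  moreover have "(1 / real p) ^ n = real p powr (- real_of_int (int n))"
    using p_gt1 by (simp add: powr_minus powr_realpow divide_inverse power_inverse)
  ultimately show ?thesis by metis
qed

lemma pc_cauchy: assumes "pc p X" shows "padic_cauchy p X"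
  unfolding padic_cauchy_def
proof (intro allI impI)
  fix e :: real assume "e > 0"
  then obtain E where E: "real p powr (- real_of_int E) < e" using small_pow by blast
  obtain M where "\<forall>m\<ge>M. \<forall>k\<ge>M. Dp p E (X m - X k)" using assms unfolding pc_def by blast
  then have "\<forall>m\<ge>M. \<forall>k\<ge>M. pabs p (X m - X k) < e"
    using Dp_pabs[OF pp] E by (meson le_less_trans)
  then show "\<exists>M. \<forall>m\<ge>M. \<forall>k\<ge>M. pabs p (X m - X k) < e" by blast
qed

lemma pabs_nonneg: "pabs p q \<ge> 0" unfolding pabs_def by simp

lemma pnull_tendsto: assumes "pnull p X" shows "(\<lambda>N. pabs p (X N)) \<longlonglongrightarrow> 0"
proof (rule LIMSEQ_I)
  fix r :: real assume "r > 0"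
  then obtain E where E: "real p powr (- real_of_int E) < r" using small_pow by blast
  obtain M where "\<forall>m\<ge>M. Dp p E (X m)" using assms unfolding pnull_def by blast
  then have "\<forall>m\<ge>M. norm (pabs p (X m) - 0) < r"
    using Dp_pabs[OF pp] E pabs_nonneg by (simp add: abs_of_nonneg) (meson le_less_trans)
  then show "\<exists>M. \<forall>m\<ge>M. norm (pabs p (X m) - 0) < r" by blast
qed

lemma pabs_conv: assumes pcX: "pc p X" shows "convergent (\<lambda>N. pabs p (X N))"
proof (cases "pnull p X")
  case True then show ?thesis using pnull_tendsto convergent_def by blast
next
  case False
  then obtain E where nE: "\<forall>M. \<exists>m\<ge>M. \<not> Dp p E (X m)" unfolding pnull_def by blast
  obtain M where M: "\<forall>m\<ge>M. \<forall>k\<ge>M. Dp p E (X m - X k)" using pcX unfolding pc_def by blast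
  obtain N1 where N1: "N1 \<ge> M" "\<not> Dp p E (X N1)" using nE by blast
  then have "X N1 \<noteq> 0" using Dp_zero[OF pp] by auto
  then obtain u w v where R: "\<not> int p dvd u" "\<not> int p dvd w" "X N1 = of_int u / of_int w * of_nat p powi v"
    using rep_exists[OF pp] by blast
  have "v < E"
  proof (rule ccontr)
    assume "\<not> v < E"
    moreover have "Dp p v (X N1)" using R unfolding Dp_def by blast
    ultimately show False using N1 Dp_mono[OF pp] by (meson not_less)
  qed
  have "\<forall>N\<ge>M. pabs p (X N) = real p powr (- real_of_int v)"
  proof (intro allI impI)
    fix N assume "N \<ge> M"
    then have "Dp p E (X N - X N1)" using M N1 by blast
    then have "Dp p (v+1) (X N - X N1)" using Dp_mono[OF pp] \<open>v < E\<close> by (metis zless_imp_add1_zle)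
    then have "pval p (X N) = v \<and> X N \<noteq> 0" using pval_perturb[OF pp R] by blast
    then show "pabs p (X N) = real p powr (- real_of_int v)" unfolding pabs_def by simp
  qed
  then have "(\<lambda>N. pabs p (X N)) \<longlonglongrightarrow> real p powr (- real_of_int v)"
    by (intro tendsto_eventually) (auto simp: eventually_at_top_linorder)
  then show ?thesis using convergent_def by blast
qed

lemma pnorm_le: assumes "pc p X" "\<exists>N0. \<forall>N\<ge>N0. Dp p E (X N)"
  shows "padic_norm p X \<le> real p powr (- real_of_int E)"
proof -
  have "(\<lambda>N. pabs p (X N)) \<longlonglongrightarrow> padic_norm p X"
    using pabs_conv[OF assms(1)] unfolding padic_norm_def convergent_LIMSEQ_iff .
  moreover obtain N0 where "\<forall>N\<ge>N0. Dp p E (X N)" using assms(2) by blast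
  then have "\<forall>N\<ge>N0. pabs p (X N) \<le> real p powr (- real_of_int E)" using Dp_pabs[OF pp] by blast
  ultimately show ?thesis by (intro LIMSEQ_le_const2) blast+
qed

lemma pnorm_ge: assumes "pc p X" shows "padic_norm p X \<ge> 0"
proof -
  have "(\<lambda>N. pabs p (X N)) \<longlonglongrightarrow> padic_norm p X"
    using pabs_conv[OF assms(1)] unfolding padic_norm_def convergent_LIMSEQ_iff .
  then show ?thesis using pabs_nonneg by (intro LIMSEQ_le_const) auto
qed

lemma pc_diff: "pc p X \<Longrightarrow> pc p Y \<Longrightarrow> pc p (\<lambda>N. X N - Y N)"
  unfolding pc_def
proof (intro allI)
  fix E assume A: "\<forall>E. \<exists>M. \<forall>m\<ge>M. \<forall>k\<ge>M. Dp p E (X m - X k)" and B: "\<forall>E. \<exists>M. \<forall>m\<ge>M. \<forall>k\<ge>M. Dp p E (Y m - Y k)"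
  obtain M1 where M1: "\<forall>m\<ge>M1. \<forall>k\<ge>M1. Dp p E (X m - X k)" using A by blast
  obtain M2 where M2: "\<forall>m\<ge>M2. \<forall>k\<ge>M2. Dp p E (Y m - Y k)" using B by blast
  have "\<forall>m\<ge>max M1 M2. \<forall>k\<ge>max M1 M2. Dp p E ((X m - Y m) - (X k - Y k))"
  proof (intro allI impI)
    fix m k assume "m \<ge> max M1 M2" "k \<ge> max M1 M2"
    then have "Dp p E ((X m - X k) - (Y m - Y k))" using M1 M2 Dp_diff[OF pp] by simp
    moreover have "(X m - X k) - (Y m - Y k) = (X m - Y m) - (X k - Y k)" by simp
    ultimately show "Dp p E ((X m - Y m) - (X k - Y k))" by simp
  qed
  then show "\<exists>M. \<forall>m\<ge>M. \<forall>k\<ge>M. Dp p E (X m - Y m - (X k - Y k))" by blast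
qed

lemma pc_neg: "pc p X \<Longrightarrow> pc p (\<lambda>N. - X N)"
  unfolding pc_def using Dp_uminus[OF pp] by (metis minus_diff_eq minus_diff_minus)

lemma pc_add: "pc p X \<Longrightarrow> pc p Y \<Longrightarrow> pc p (\<lambda>N. X N + Y N)"
  using pc_diff[of X "\<lambda>N. - Y N"] pc_neg[of Y] by simp

lemma pc_const: "pc p (\<lambda>N. c)"
  unfolding pc_def using Dp_zero[OF pp] by simp

lemma pc_sum: "finite A \<Longrightarrow> (\<And>x. x \<in> A \<Longrightarrow> pc p (F x)) \<Longrightarrow> pc p (\<lambda>N. \<Sum>x\<in>A. F x N)"
proof (induction A rule: finite_induct)
  case empty then show ?case using pc_const[of 0] by simp
next
  case (insert x A) then show ?case using pc_add[of "F x" "\<lambda>N. \<Sum>x\<in>A. F x N"] by simp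
qed

lemma pc_cmult: assumes "pc p X" shows "pc p (\<lambda>N. c * X N)"
  unfolding pc_def
proof
  fix E
  obtain ec where ec: "Dp p ec c" using Dp_exists[OF pp] by blast
  obtain M where M: "\<forall>m\<ge>M. \<forall>k\<ge>M. Dp p (E - ec) (X m - X k)" using assms unfolding pc_def by blast
  have "\<forall>m\<ge>M. \<forall>k\<ge>M. Dp p E (c * X m - c * X k)"
  proof (intro allI impI)
    fix m k assume "m \<ge> M" "k \<ge> M"
    then have "Dp p (ec + (E - ec)) (c * (X m - X k))" using Dp_mult[OF pp ec] M by blast
    then show "Dp p E (c * X m - c * X k)" by (simp add: algebra_simps)
  qed
  then show "\<exists>M. \<forall>m\<ge>M. \<forall>k\<ge>M. Dp p E (c * X m - c * X k)" by blast
qed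

lemma padic_lim_crit:
  assumes "pc p L" "\<And>m. pc p (F m)"
    and H: "\<And>E. \<exists>M. \<forall>m\<ge>M. \<exists>N0. \<forall>N\<ge>N0. Dp p E (F m N - L N)"
  shows "padic_lim p F L"
  unfolding padic_lim_def
proof (intro conjI allI)
  show "padic_cauchy p L" using pc_cauchy assms(1) by blast
  fix m show "padic_cauchy p (F m)" using pc_cauchy assms(2) by blast
next
  show "(\<lambda>m. padic_norm p (\<lambda>N. F m N - L N)) \<longlonglongrightarrow> 0"
  proof (rule LIMSEQ_I)
    fix r :: real assume "r > 0"
    then obtain E where E: "real p powr (- real_of_int E) < r" using small_pow by blast
    obtain M where M: "\<forall>m\<ge>M. \<exists>N0. \<forall>N\<ge>N0. Dp p E (F m N - L N)" using H by blast
    have "\<forall>m\<ge>M. norm (padic_norm p (\<lambda>N. F m N - L N) - 0) < r"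
    proof (intro allI impI)
      fix m assume "m \<ge> M"
      have pcm: "pc p (\<lambda>N. F m N - L N)" using pc_diff assms(1,2) by blast
      have "padic_norm p (\<lambda>N. F m N - L N) \<le> real p powr (- real_of_int E)"
        using pnorm_le[OF pcm] M \<open>m \<ge> M\<close> by blast
      moreover have "padic_norm p (\<lambda>N. F m N - L N) \<ge> 0" using pnorm_ge[OF pcm] .
      ultimately show "norm (padic_norm p (\<lambda>N. F m N - L N) - 0) < r" using E by simp
    qed
    then show "\<exists>M. \<forall>m\<ge>M. norm (padic_norm p (\<lambda>N. F m N - L N) - 0) < r" by blast
  qed
qed

lemma padic_eq_crit:
  assumes "pc p X" "pc p Y" "pnull p (\<lambda>N. X N - Y N)"
  shows "padic_eq p X Y"
  unfolding padic_eq_def using assms pc_cauchy pnull_tendsto by blast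

lemma volkenborn_crit:
  assumes "pc p L" "\<And>k. pc p (f k)"
    and H: "\<And>E. \<exists>M. \<forall>m\<ge>M. \<exists>N0. \<forall>N\<ge>N0. Dp p E ((\<Sum>k<p ^ m. f k N) / of_nat p ^ m - L N)"
  shows "volkenborn p f L"
  unfolding volkenborn_def
proof (rule padic_lim_crit[OF assms(1) _ H])
  fix m
  have "pc p (\<lambda>N. (\<Sum>k<p ^ m. f k N))" using pc_sum assms(2) by blast
  then have "pc p (\<lambda>N. (1 / of_nat p ^ m) * (\<Sum>k<p ^ m. f k N))" by (rule pc_cmult)
  then show "pc p (\<lambda>N. (\<Sum>k<p ^ m. f k N) / of_nat p ^ m)" by simp
qed

end

definition T :: "nat \<Rightarrow> nat \<Rightarrow> (nat \<Rightarrow> rat) \<Rightarrow> rat" where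
  "T p m f = (\<Sum>k<p ^ m. f k) / of_nat p ^ m"

lemma sum_split_mult: fixes g :: "nat \<Rightarrow> 'a::comm_monoid_add" shows "(\<Sum>t<c * P. g t) = (\<Sum>k<P. \<Sum>i<c. g (k + i * P))"
proof -
  have "(\<Sum>t<c * P. g t) = (\<Sum>i<c. sum g {i * P..<i * P + P})"
    using sum.nat_group[of g P c] by simp
  also have "\<dots> = (\<Sum>i<c. \<Sum>k<P. g (k + i * P))"
  proof (rule sum.cong[OF refl])
    fix i
    show "sum g {i * P..<i * P + P} = (\<Sum>k<P. g (k + i * P))"
      using sum.shift_bounds_nat_ivl[of g 0 "i * P" P] by (simp add: atLeast0LessThan add.commute)
  qed
  also have "\<dots> = (\<Sum>k<P. \<Sum>i<c. g (k + i * P))" by (rule sum.swap)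
  finally show ?thesis .
qed

lemma int_pow_diff_dvd: "(x - y) dvd (x ^ n - y ^ n)" for x y :: int
proof (cases n)
  case 0 then show ?thesis by simp
next
  case (Suc m) then show ?thesis using diff_power_eq_sum[of x m y] by simp
qed

lemma int_taylor2: "\<exists>z. (Q + H) ^ a = Q ^ a + int a * H * Q ^ (a - 1) + H^2 * z" for Q H :: int
proof (induction a)
  case 0 then show ?case by (rule exI[of _ 0]) simp
next
  case (Suc a)
  then obtain z where z: "(Q + H) ^ a = Q ^ a + int a * H * Q ^ (a - 1) + H^2 * z" by blast
  show ?case
  proof (cases a)
    case 0 then show ?thesis by (rule_tac exI[of _ 0]) simp
  next
    case (Suc b)
    have "(Q + H) ^ Suc a = (Q + H) * (Q ^ a + int a * H * Q ^ (a - 1) + H^2 * z)" using z by simp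
    also have "\<dots> = Q ^ Suc a + int (Suc a) * H * Q ^ (Suc a - 1) + H^2 * (int a * Q ^ (a - 1) + (Q + H) * z)"
      using Suc by (simp add: algebra_simps power2_eq_square)
    finally show ?thesis by blast
  qed
qed

context
  fixes p :: nat
  assumes pp: "prime p"
begin

lemma pn0: "(of_nat p :: rat) \<noteq> 0" using p_pos[OF pp] .

lemma T_step: "T p (Suc m) f - T p m f =
   (\<Sum>k<p ^ m. \<Sum>c<p. (f (k + c * p ^ m) - f k)) / of_nat p ^ Suc m"
proof -
  have "(\<Sum>t<p ^ Suc m. f t) = (\<Sum>k<p ^ m. \<Sum>c<p. f (k + c * p ^ m))"
    using sum_split_mult[of f p "p ^ m"] by (simp add: mult.commute)
  moreover have "T p m f = (\<Sum>k<p ^ m. \<Sum>c<p. f k) / of_nat p ^ Suc m"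
    unfolding T_def using pn0 by (simp add: sum_distrib_left[symmetric] field_simps)
  ultimately show ?thesis unfolding T_def by (simp add: sum_subtractf diff_divide_distrib)
qed

lemma T_step_Dp:
  assumes "\<And>k c. c < p \<Longrightarrow> Dp p e (f (k + c * p ^ m) - f k)"
  shows "Dp p (e - int m - 1) (T p (Suc m) f - T p m f)"
proof -
  have "Dp p e (\<Sum>k<p ^ m. \<Sum>c<p. (f (k + c * p ^ m) - f k))"
    using assms by (intro Dp_sum[OF pp]) auto
  from Dp_div_ppow[OF pp this, of "Suc m"] show ?thesis by (simp add: T_step algebra_simps)
qed

lemma T_crude:
  assumes bnd: "\<And>k. Dp p b (f k)"
    and lip: "\<And>k h m. p ^ m dvd h \<Longrightarrow> Dp p (int m + \<beta>) (f (k + h) - f k)"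
  shows "Dp p (min b (\<beta> - 1)) (T p m f)"
proof (induction m)
  case 0 then show ?case using bnd[of 0] Dp_mono[OF pp] by (simp add: T_def) (meson min.cobounded1)
next
  case (Suc m)
  have "Dp p (int m + \<beta> - int m - 1) (T p (Suc m) f - T p m f)"
    using lip by (intro T_step_Dp) auto
  then have "Dp p (min b (\<beta> - 1)) (T p (Suc m) f - T p m f)"
    using Dp_mono[OF pp] by (metis add_diff_cancel_left' min.cobounded2)
  from Dp_add[OF pp this Suc.IH] show ?case by simp
qed

lemma sum_c: "(\<Sum>c<p. (of_nat c :: rat)) = of_nat (\<Sum>c<p. c)" by simp

lemma T_taylor_step:
  assumes tay: "\<And>k h m. p ^ m dvd h \<Longrightarrow> Dp p (2 * int m + \<gamma>) (f (k + h) - f k - of_nat h * w k)"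
    and wbnd: "\<And>m. Dp p Bw (T p m w)"
  shows "Dp p (int m + min (Bw - 1) (\<gamma> - 1)) (T p (Suc m) f - T p m f)"
proof -
  let ?P = "p ^ m"
  have split: "f (k + c * ?P) - f k = of_nat c * of_nat ?P * w k + (f (k + c * ?P) - f k - of_nat (c * ?P) * w k)" for k c
    by simp
  have "(\<Sum>k<?P. \<Sum>c<p. (f (k + c * ?P) - f k)) =
        (\<Sum>k<?P. \<Sum>c<p. of_nat c * of_nat ?P * w k) + (\<Sum>k<?P. \<Sum>c<p. (f (k + c * ?P) - f k - of_nat (c * ?P) * w k))"
    by (simp add: sum.distrib[symmetric])
  also have "(\<Sum>k<?P. \<Sum>c<p. of_nat c * of_nat ?P * w k) = of_nat (\<Sum>c<p. c) * (of_nat ?P * of_nat ?P) * T p m w"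
    unfolding T_def using pn0 by (simp add: sum_distrib_left[symmetric] sum_distrib_right[symmetric] field_simps)
  finally have eq: "T p (Suc m) f - T p m f = of_nat (\<Sum>c<p. c) * (of_nat ?P * of_nat ?P) * T p m w / of_nat p ^ Suc m
      + (\<Sum>k<?P. \<Sum>c<p. (f (k + c * ?P) - f k - of_nat (c * ?P) * w k)) / of_nat p ^ Suc m"
    by (simp add: T_step add_divide_distrib)
  have A: "Dp p (int m + (Bw - 1)) (of_nat (\<Sum>c<p. c) * (of_nat ?P * of_nat ?P) * T p m w / of_nat p ^ Suc m)"
  proof -
    have "Dp p (0 + (int m + int m)) (of_nat (\<Sum>c<p. c) * (of_nat ?P * of_nat ?P))"
      using Dp_mult[OF pp Dp_nat[OF pp, of "\<Sum>c<p. c"] Dp_mult[OF pp Dp_ppow[OF pp, of "int m"] Dp_ppow[OF pp, of "int m"]]]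
      by (simp add: power_int_def del: of_nat_sum)
    from Dp_div_ppow[OF pp Dp_mult[OF pp this wbnd[of m]], of "Suc m"] show ?thesis by (simp add: algebra_simps)
  qed
  have B: "Dp p (int m + (\<gamma> - 1)) ((\<Sum>k<?P. \<Sum>c<p. (f (k + c * ?P) - f k - of_nat (c * ?P) * w k)) / of_nat p ^ Suc m)"
  proof -
    have "Dp p (2 * int m + \<gamma>) (\<Sum>k<?P. \<Sum>c<p. (f (k + c * ?P) - f k - of_nat (c * ?P) * w k))"
    proof (intro Dp_sum[OF pp])
      fix k c
      have "Dp p (2 * int m + \<gamma>) (f (k + c * ?P) - f k - of_nat (c * ?P) * w k)" by (rule tay) simp
      then show "Dp p (2 * int m + \<gamma>) (f (k + c * ?P) - f k - of_nat (c * ?P) * w k)" .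
    qed auto
    from Dp_div_ppow[OF pp this, of "Suc m"] show ?thesis by (simp add: algebra_simps)
  qed
  show ?thesis unfolding eq
    by (rule Dp_add[OF pp]; rule Dp_mono[OF pp _ A] Dp_mono[OF pp _ B]; simp)
qed

lemma T_cauchy_from_step:
  assumes step: "\<And>m. Dp p (int m + C) (g (Suc m) - g m)"
  shows "m \<le> N \<Longrightarrow> Dp p (int m + C) (g N - g m)"
proof (induction N)
  case 0 then show ?case using Dp_zero[OF pp] by simp
next
  case (Suc N)
  show ?case
  proof (cases "m \<le> N")
    case True
    have "Dp p (int m + C) (g (Suc N) - g N)" using step[of N] Dp_mono[OF pp] True by (meson add_right_mono of_nat_le_iff)
    from Dp_add[OF pp this Suc.IH[OF True]] show ?thesis by simp
  next
    case False then have "m = Suc N" using Suc.prems by simp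
    then show ?thesis using Dp_zero[OF pp] by simp
  qed
qed

end

definition qq :: "nat \<Rightarrow> nat \<Rightarrow> nat \<Rightarrow> nat" where "qq p j n = p * n + j"
definition uu :: "nat \<Rightarrow> nat \<Rightarrow> nat \<Rightarrow> nat \<Rightarrow> rat" where "uu p j b n = 1 / of_nat (qq p j n) ^ b"
definition ww :: "nat \<Rightarrow> nat \<Rightarrow> nat \<Rightarrow> nat \<Rightarrow> rat" where "ww p j a n = - (of_nat a * of_nat p) * uu p j (Suc a) n"

context
  fixes p j :: nat
  assumes pp: "prime p" and pj: "\<not> p dvd j"
begin

lemma q_unit: "\<not> int p dvd int (qq p j n) ^ b"
proof
  assume "int p dvd int (qq p j n) ^ b"
  then have "int p dvd int (qq p j n)" using pint[OF pp] prime_dvd_power by blast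
  then have "p dvd p * n + j" unfolding qq_def by presburger
  then show False using pj by (simp add: dvd_add_right_iff)
qed

lemma q_nz: "qq p j n \<noteq> 0" using q_unit[of n 1] by (metis dvd_0_right of_nat_0 power_one_right)

lemma qq_add: "int (qq p j (n + h)) - int (qq p j n) = int p * int h"
  unfolding qq_def by (simp add: algebra_simps)

lemma uu_bnd: "Dp p 0 (uu p j b n)"
  unfolding uu_def using Dp_inv_unit[OF pp q_unit[of n b]] by simp

lemma uu_lip:
  assumes "p ^ m dvd h"
  shows "Dp p (int m + 1) (uu p j b (n + h) - uu p j b n)"
proof -
  define X where "X = int (qq p j (n + h))"
  define Y where "Y = int (qq p j n)"
  have X0: "X \<noteq> 0" and Y0: "Y \<noteq> 0" using q_nz unfolding X_def Y_def by auto
  have "uu p j b (n + h) - uu p j b n = of_int (Y ^ b - X ^ b) * (1 / of_int (X ^ b * Y ^ b))"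
    unfolding uu_def X_def Y_def using X0 Y0 q_nz by (simp add: field_simps)
  moreover have "int p ^ Suc m dvd Y ^ b - X ^ b"
  proof -
    have "int p ^ m dvd int h" using assms by (metis of_nat_dvd_iff of_nat_power)
    then have "int p ^ Suc m dvd X - Y" unfolding X_def Y_def qq_add
      by (simp add: mult_dvd_mono)
    moreover have "X - Y dvd X ^ b - Y ^ b" by (rule int_pow_diff_dvd)
    ultimately have "int p ^ Suc m dvd X ^ b - Y ^ b" by (rule dvd_trans)
    then show ?thesis by (metis dvd_minus_iff minus_diff_eq)
  qed
  moreover have "\<not> int p dvd X ^ b * Y ^ b"
    using q_unit pint[OF pp] unfolding X_def Y_def by (simp add: prime_dvd_mult_iff)
  ultimately show ?thesis
    using Dp_mult[OF pp Dp_int_dvd[OF pp] Dp_inv_unit[OF pp], of "Suc m" "Y ^ b - X ^ b" "X ^ b * Y ^ b"] by (simp add: add.commute)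
qed

lemma uu_taylor:
  assumes "p ^ m dvd h" "a \<ge> 1"
  shows "Dp p (2 * int m + 2) (uu p j a (n + h) - uu p j a n - of_nat h * ww p j a n)"
proof -
  define X where "X = int (qq p j (n + h))"
  define Y where "Y = int (qq p j n)"
  define H where "H = int p * int h"
  have XY: "X = Y + H" unfolding X_def Y_def H_def using qq_add[of n h] by linarith
  have X0: "X \<noteq> 0" and Y0: "Y \<noteq> 0" using q_nz unfolding X_def Y_def by auto
  obtain z where z: "(Y + H) ^ a = Y ^ a + int a * H * Y ^ (a - 1) + H^2 * z" using int_taylor2 by blast
  define NUM where "NUM = Y ^ Suc a - X ^ a * Y + int a * H * X ^ a"
  have "uu p j a (n + h) - uu p j a n - of_nat h * ww p j a n =
        1 / of_int X ^ a - 1 / of_int Y ^ a + of_int (int a * H) / of_int Y ^ Suc a"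
    unfolding uu_def ww_def X_def Y_def H_def by (simp add: field_simps)
  also have "\<dots> = of_int NUM * (1 / of_int (X ^ a * Y ^ Suc a))"
    unfolding NUM_def using X0 Y0 by (simp add: field_simps)
  finally have eq: "uu p j a (n + h) - uu p j a n - of_nat h * ww p j a n = of_int NUM * (1 / of_int (X ^ a * Y ^ Suc a))" .
  have Ya: "Y * Y ^ (a - 1) = Y ^ a" using assms(2) by (metis Suc_diff_le diff_Suc_1 power_Suc)
  have NUMe: "NUM = H^2 * (int a * int a * Y ^ (a - 1) + int a * H * z - z * Y)"
    unfolding NUM_def XY z
    using Ya by (simp add: algebra_simps power2_eq_square)
  then have "int p ^ (2 * m + 2) dvd NUM"
  proof -
    have "int p ^ m dvd int h" using assms(1) by (metis of_nat_dvd_iff of_nat_power)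
    then have "int p ^ Suc m dvd H" unfolding H_def by (simp add: mult_dvd_mono)
    then have "int p ^ Suc m * int p ^ Suc m dvd H ^ 2" by (simp add: power2_eq_square mult_dvd_mono)
    moreover have e2: "2 * m + 2 = Suc m + Suc m" by simp
    have "int p ^ (2 * m + 2) = int p ^ Suc m * int p ^ Suc m" by (simp only: e2 power_add)
    ultimately have "int p ^ (2 * m + 2) dvd H ^ 2" by metis
    then show ?thesis using NUMe by simp
  qed
  moreover have "\<not> int p dvd X ^ a * Y ^ Suc a"
    unfolding X_def Y_def using q_unit[of "n+h" a] q_unit[of n "Suc a"] pint[OF pp] prime_dvd_mult_iff by blast
  ultimately have "Dp p (int (2 * m + 2) + 0) (of_int NUM * (1 / of_int (X ^ a * Y ^ Suc a)))"
    by (intro Dp_mult[OF pp Dp_int_dvd[OF pp] Dp_inv_unit[OF pp]])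
  then show ?thesis unfolding eq by (simp add: add.commute)
qed

lemma ww_bnd: "Dp p 0 (ww p j a n)"
  unfolding ww_def using Dp_mult[OF pp Dp_int[OF pp, of "- (int a * int p)"] uu_bnd] by simp

lemma ww_lip: "p ^ m dvd h \<Longrightarrow> Dp p (int m + 1) (ww p j a (n + h) - ww p j a n)"
  unfolding ww_def using Dp_mult[OF pp Dp_int[OF pp, of "- (int a * int p)"] uu_lip]
  by (simp add: algebra_simps)

lemma G_bnd: "Dp p 0 (T p m (uu p j b))"
  using T_crude[OF pp, of 0 "uu p j b" 1 m] uu_bnd uu_lip by simp

lemma G_step: assumes "a \<ge> 1" shows "Dp p (int m - 1) (T p (Suc m) (uu p j a) - T p m (uu p j a))"
proof -
  have wb: "Dp p 0 (T p m' (ww p j a))" for m'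
    using T_crude[OF pp, of 0 "ww p j a" 1 m'] ww_bnd ww_lip by simp
  show ?thesis using T_taylor_step[OF pp, of 2 "uu p j a" "ww p j a" 0 m] uu_taylor[OF _ assms] wb
    by simp
qed

lemma G_cauchy: assumes "a \<ge> 1" "m \<le> N" shows "Dp p (int m - 1) (T p N (uu p j a) - T p m (uu p j a))"
  using T_cauchy_from_step[OF pp, of "-1" "\<lambda>m. T p m (uu p j a)"] G_step[OF assms(1)] assms(2) by simp

end

context
  fixes p :: nat
  assumes pp: "prime p"
begin

lemma teich1:
  fixes a b :: int
  assumes "int p ^ e dvd a - b" "e \<ge> 1"
  shows "int p ^ Suc e dvd a ^ p - b ^ p"
proof -
  have p1: "p \<ge> 1" using prime_gt_0_nat[OF pp] by simp
  have eq: "a ^ p - b ^ p = (a - b) * (\<Sum>i<p. a ^ i * b ^ (p - 1 - i))"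
    using diff_power_eq_sum[of a "p - 1" b] p1 by simp
  have "int p dvd a - b" using assms by (meson dvd_power dvd_trans le_numeral_extra(2) not_one_le_zero order.trans not_le zero_less_iff_neq_zero dvd_power_le dvd_refl)
  then have ab: "[a = b] (mod int p)" by (simp add: cong_iff_dvd_diff)
  have "[(\<Sum>i<p. a ^ i * b ^ (p - 1 - i)) = (\<Sum>i<p. b ^ i * b ^ (p - 1 - i))] (mod int p)"
    by (intro cong_sum cong_mult cong_pow ab cong_refl)
  moreover have "(\<Sum>i<p. b ^ i * b ^ (p - 1 - i)) = int p * b ^ (p - 1)"
  proof -
    have "(\<Sum>i<p. b ^ i * b ^ (p - 1 - i)) = (\<Sum>i<p. b ^ (p - 1))"
      by (rule sum.cong[OF refl]) (simp add: power_add[symmetric])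
    then show ?thesis by simp
  qed
  ultimately have "int p dvd (\<Sum>i<p. a ^ i * b ^ (p - 1 - i))"
    by (metis cong_dvd_iff dvd_triv_left)
  then have "int p ^ e * int p dvd a ^ p - b ^ p" using assms(1) eq by (simp add: mult_dvd_mono)
  then show ?thesis by (simp add: mult.commute)
qed

lemma teichN:
  fixes a b :: int
  assumes "int p dvd a - b"
  shows "int p ^ Suc N dvd a ^ (p ^ N) - b ^ (p ^ N)"
proof (induction N)
  case 0 then show ?case using assms by simp
next
  case (Suc N)
  have "int p ^ Suc (Suc N) dvd (a ^ (p ^ N)) ^ p - (b ^ (p ^ N)) ^ p"
    using teich1[OF Suc.IH] by simp
  then show ?case by (simp add: power_mult[symmetric] mult.commute)
qed

lemma fermatN:
  fixes q :: nat
  assumes "\<not> p dvd q"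
  shows "[q ^ (p ^ N) = q] (mod p)"
proof (induction N)
  case 0 then show ?case by simp
next
  case (Suc N)
  have p1: "p \<ge> 1" using prime_gt_0_nat[OF pp] by simp
  have f: "[q ^ (p - 1) = 1] (mod p)" using fermat_theorem[OF pp assms] .
  have "[q ^ p = q] (mod p)"
  proof -
    have "[q * q ^ (p - 1) = q * 1] (mod p)" by (intro cong_mult cong_refl f)
    moreover have "q * q ^ (p - 1) = q ^ p" using p1 by (metis power_Suc Suc_diff_1 less_le_trans zero_less_one)
    ultimately show ?thesis by simp
  qed
  moreover have "[(q ^ (p ^ N)) ^ p = q ^ p] (mod p)" by (intro cong_pow Suc.IH)
  ultimately have "[(q ^ (p ^ N)) ^ p = q] (mod p)" by (rule cong_trans[rotated])
  then show ?case by (simp add: power_mult[symmetric] mult.commute)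
qed

lemma master_cong:
  fixes q q' :: nat
  assumes "\<not> p dvd q" "[q = q'] (mod p)" "N \<le> N'"
  shows "int p ^ Suc N dvd (int q ^ (p ^ N')) ^ a - (int q' ^ (p ^ N)) ^ a"
proof -
  have "[q ^ (p ^ (N' - N)) = q'] (mod p)" using fermatN[OF assms(1)] assms(2) cong_trans by blast
  then have "int p dvd int q ^ (p ^ (N' - N)) - int q'"
    by (metis cong_iff_dvd_diff cong_int_iff of_nat_power)
  from teichN[OF this, of N] have "int p ^ Suc N dvd (int q ^ (p ^ (N' - N))) ^ (p ^ N) - int q' ^ (p ^ N)" .
  moreover have "(int q ^ (p ^ (N' - N))) ^ (p ^ N) = int q ^ (p ^ N')"
    using assms(3) by (simp add: power_mult[symmetric] power_add[symmetric])
  ultimately have "int p ^ Suc N dvd int q ^ (p ^ N') - int q' ^ (p ^ N)" by simp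
  then show ?thesis using int_pow_diff_dvd dvd_trans by blast
qed

end

context
  fixes p :: nat
  assumes pp: "prime p"
begin

lemma pc_rate:
  assumes "\<And>N N'. N \<le> N' \<Longrightarrow> Dp p (int N - c) (X N' - X N)"
  shows "pc p X"
  unfolding pc_def
proof
  fix E
  have "\<forall>m\<ge>nat (E + c). \<forall>k\<ge>nat (E + c). Dp p E (X m - X k)"
  proof (intro allI impI)
    fix m k assume m: "m \<ge> nat (E + c)" and k: "k \<ge> nat (E + c)"
    show "Dp p E (X m - X k)"
    proof (cases "k \<le> m")
      case True
      then have "Dp p (int k - c) (X m - X k)" using assms by blast
      then show ?thesis using Dp_mono[OF pp] k by (metis le_diff_eq nat_le_iff add.commute)
    next
      case False
      then have "Dp p (int m - c) (X k - X m)" using assms by simp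
      then have "Dp p (int m - c) (X m - X k)" using Dp_uminus[OF pp] by (metis minus_diff_eq)
      then show ?thesis using Dp_mono[OF pp] m by (metis le_diff_eq nat_le_iff add.commute)
    qed
  qed
  then show "\<exists>M. \<forall>m\<ge>M. \<forall>k\<ge>M. Dp p E (X m - X k)" by blast
qed

lemma T_diff: "T p m (\<lambda>k. f k - g k) = T p m f - T p m g"
  unfolding T_def by (simp add: sum_subtractf diff_divide_distrib)

lemma T_add: "T p m (\<lambda>k. f k + g k) = T p m f + T p m g"
  unfolding T_def by (simp add: sum.distrib add_divide_distrib)

lemma T_cmult: "T p m (\<lambda>k. c * f k) = c * T p m f"
  unfolding T_def by (simp add: sum_distrib_left[symmetric])

lemma T_bnd: "(\<And>k. Dp p e (f k)) \<Longrightarrow> Dp p (e - int m) (T p m f)"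
  unfolding T_def by (intro Dp_div_ppow[OF pp] Dp_sum[OF pp]) auto

lemma Omega_diff:
  fixes q q' :: nat
  assumes "\<not> p dvd q" "[q = q'] (mod p)" "N \<le> N'"
  shows "Dp p (int N + 1) ((of_nat q ^ (p ^ N')) ^ a - (of_nat q' ^ (p ^ N)) ^ a)"
  using Dp_int_dvd[OF pp master_cong[OF pp assms, of a]] by (simp add: add.commute)

context
  fixes j :: nat
  assumes pj: "\<not> p dvd j"
begin

lemma x_rep: "(of_nat n + of_nat j / of_nat p :: rat) = of_int (int (qq p j n)) / of_int 1 * of_nat p powi (-1)"
  unfolding qq_def using pn0[OF pp] by (simp add: power_int_minus field_simps)

lemma pval_x: "pval p (of_nat n + of_nat j / of_nat p) = -1"
proof -
  have u: "\<not> int p dvd int (qq p j n)" using q_unit[OF pp pj, of n 1] by simp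
  have w: "\<not> int p dvd 1" by (metis pint[OF pp] not_prime_unit)
  show ?thesis using pval_rep[OF pp u w x_rep] .
qed

lemma punit_x: "punit p (of_nat n + of_nat j / of_nat p) = of_nat (qq p j n)"
  unfolding punit_def pval_x using x_rep pn0[OF pp] by (simp add: power_int_minus)

lemma omega_x: "omega p (of_nat n + of_nat j / of_nat p) N = of_nat p powi (-1) * of_nat (qq p j n) ^ (p ^ N)"
  unfolding omega_def pval_x punit_x ..

lemma pangle_x: "pangle p (of_nat n + of_nat j / of_nat p) N = of_nat (qq p j n) / of_nat (qq p j n) ^ (p ^ N)"
  unfolding pangle_def omega_x using x_rep[of n] pn0[OF pp] by (simp add: power_int_minus field_simps)

lemma hur_integrand:
  "(pangle p (of_nat n + of_nat j / of_nat p) N) powi (1 - int (Suc a)) = (of_nat (qq p j n) ^ (p ^ N)) ^ a * uu p j a n"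
proof -
  have "1 - int (Suc a) = - int a" by simp
  then show ?thesis unfolding pangle_x uu_def
    by (simp add: power_int_minus power_divide field_simps)
qed

lemma omega_j: "omega p (of_nat j / of_nat p) N powi (1 - int (Suc a)) = of_nat p ^ a / (of_nat j ^ (p ^ N)) ^ a"
proof -
  have "omega p (of_nat j / of_nat p) N = omega p (of_nat 0 + of_nat j / of_nat p) N" by simp
  also have "\<dots> = of_nat p powi (-1) * of_nat j ^ (p ^ N)" unfolding omega_x by (simp add: qq_def)
  finally have om: "omega p (of_nat j / of_nat p) N = of_nat p powi (-1) * of_nat j ^ (p ^ N)" .
  have e: "1 - int (Suc a) = - int a" by simp
  show ?thesis unfolding om e using pn0[OF pp]
    by (simp add: power_int_minus power_mult_distrib power_inverse field_simps)
qed

definition hw :: "nat \<Rightarrow> nat \<Rightarrow> rat" where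
  "hw a N = (of_nat j ^ (p ^ N)) ^ a * T p N (uu p j a)"

lemma qq_cong: "[qq p j n = j] (mod p)" unfolding qq_def by (simp add: cong_def)

lemma hw_pc: assumes "a \<ge> 1" shows "pc p (hw a)"
proof (rule pc_rate[of 1])
  fix N N' :: nat assume NN: "N \<le> N'"
  let ?W = "\<lambda>N. (of_nat j ^ (p ^ N) :: rat) ^ a"
  have "hw a N' - hw a N = ?W N' * (T p N' (uu p j a) - T p N (uu p j a)) + (?W N' - ?W N) * T p N (uu p j a)"
    unfolding hw_def by (simp add: algebra_simps)
  moreover have "Dp p (0 + (int N - 1)) (?W N' * (T p N' (uu p j a) - T p N (uu p j a)))"
  proof -
    have "Dp p (int a * 0) ((of_nat (j ^ (p ^ N')) :: rat) ^ a)" by (rule Dp_pow[OF pp Dp_nat[OF pp]])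
    then have "Dp p 0 (?W N')" by simp
    from Dp_mult[OF pp this G_cauchy[OF pp pj assms NN]] show ?thesis .
  qed
  moreover have "Dp p ((int N + 1) + 0) ((?W N' - ?W N) * T p N (uu p j a))"
    using Dp_mult[OF pp Omega_diff[OF pj cong_refl NN] G_bnd[OF pp pj]] .
  ultimately show "Dp p (int N - 1) (hw a N' - hw a N)"
    using Dp_add[OF pp] Dp_mono[OF pp, of "int N - 1" "int N + 1 + 0"] by simp
qed

end
end

context
  fixes p :: nat
  assumes pp: "prime p"
begin
context
  fixes j :: nat
  assumes pj: "\<not> p dvd j"
begin

lemma hur_volk:
  assumes a1: "a \<ge> 1"
  shows "volkenborn p (\<lambda>k N. (pangle p (of_nat k + of_nat j / of_nat p) N) powi (1 - int (Suc a))) (hw p j a)"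
proof (rule volkenborn_crit[OF pp hw_pc[OF pp pj a1]])
  let ?Om = "\<lambda>k N. (of_nat (qq p j k) ^ (p ^ N) :: rat) ^ a"
  fix k
  show "pc p (\<lambda>N. (pangle p (of_nat k + of_nat j / of_nat p) N) powi (1 - int (Suc a)))"
    unfolding hur_integrand[OF pp pj]
  proof (rule pc_rate[OF pp, of "-1"])
    fix N N' :: nat assume NN: "N \<le> N'"
    have "Dp p ((int N + 1) + 0) ((?Om k N' - ?Om k N) * uu p j a k)"
      using Dp_mult[OF pp Omega_diff[OF pp q_unit[OF pp pj, of k 1, simplified] cong_refl NN] uu_bnd[OF pp pj]]
      by simp
    then show "Dp p (int N - - 1) (?Om k N' * uu p j a k - ?Om k N * uu p j a k)"
      by (simp add: algebra_simps)
  qed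
next
  fix E :: int
  let ?Om = "\<lambda>k N. (of_nat (qq p j k) ^ (p ^ N) :: rat) ^ a"
  let ?W = "\<lambda>N. (of_nat j ^ (p ^ N) :: rat) ^ a"
  have "\<forall>m\<ge>nat (E + 1). \<forall>N\<ge>m + nat E + 1.
     Dp p E ((\<Sum>k<p ^ m. (pangle p (of_nat k + of_nat j / of_nat p) N) powi (1 - int (Suc a))) / of_nat p ^ m - hw p j a N)"
  proof (intro allI impI)
    fix m N assume m: "m \<ge> nat (E + 1)" and N: "N \<ge> m + nat E + 1"
    have eq: "(\<Sum>k<p ^ m. (pangle p (of_nat k + of_nat j / of_nat p) N) powi (1 - int (Suc a))) / of_nat p ^ m - hw p j a N
      = T p m (\<lambda>k. (?Om k N - ?W N) * uu p j a k) - ?W N * (T p N (uu p j a) - T p m (uu p j a))"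
    proof -
      have "T p m (\<lambda>k. (?Om k N - ?W N) * uu p j a k) = T p m (\<lambda>k. ?Om k N * uu p j a k) - T p m (\<lambda>k. ?W N * uu p j a k)"
        by (simp only: left_diff_distrib T_diff[OF pp])
      also have "T p m (\<lambda>k. ?W N * uu p j a k) = ?W N * T p m (uu p j a)" by (rule T_cmult[OF pp])
      finally have 1: "T p m (\<lambda>k. (?Om k N - ?W N) * uu p j a k) = T p m (\<lambda>k. ?Om k N * uu p j a k) - ?W N * T p m (uu p j a)" .
      have 2: "(\<Sum>k<p ^ m. (pangle p (of_nat k + of_nat j / of_nat p) N) powi (1 - int (Suc a))) / of_nat p ^ m = T p m (\<lambda>k. ?Om k N * uu p j a k)"
        unfolding hur_integrand[OF pp pj] T_def ..
      have 3: "hw p j a N = ?W N * T p N (uu p j a)" by (simp add: hw_def[OF pp pj])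
      show ?thesis unfolding 1 2 3 by (simp add: algebra_simps)
    qed
    have A: "Dp p (int N + 1 - int m) (T p m (\<lambda>k. (?Om k N - ?W N) * uu p j a k))"
    proof (rule T_bnd[OF pp])
      fix k
      have "[qq p j k = j] (mod p)" by (rule qq_cong[OF pp pj])
      from Dp_mult[OF pp Omega_diff[OF pp q_unit[OF pp pj, of k 1, simplified] this order.refl] uu_bnd[OF pp pj]]
      show "Dp p (int N + 1) ((?Om k N - ?W N) * uu p j a k)" by simp
    qed
    have B: "Dp p (0 + (int m - 1)) (?W N * (T p N (uu p j a) - T p m (uu p j a)))"
    proof -
      have "Dp p (int a * 0) ((of_nat (j ^ (p ^ N)) :: rat) ^ a)" by (rule Dp_pow[OF pp Dp_nat[OF pp]])
      then have "Dp p 0 (?W N)" by simp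
      from Dp_mult[OF pp this G_cauchy[OF pp pj a1, of m N]] N show ?thesis by simp
    qed
    have A': "Dp p E (T p m (\<lambda>k. (?Om k N - ?W N) * uu p j a k))"
      using Dp_mono[OF pp _ A] N by simp
    have B': "Dp p E (?W N * (T p N (uu p j a) - T p m (uu p j a)))"
      using Dp_mono[OF pp _ B] m by simp
    show "Dp p E ((\<Sum>k<p ^ m. (pangle p (of_nat k + of_nat j / of_nat p) N) powi (1 - int (Suc a))) / of_nat p ^ m - hw p j a N)"
      unfolding eq using Dp_diff[OF pp A' B'] .
  qed
  then show "\<exists>M. \<forall>m\<ge>M. \<exists>N0. \<forall>N\<ge>N0.
     Dp p E ((\<Sum>k<p ^ m. (pangle p (of_nat k + of_nat j / of_nat p) N) powi (1 - int (Suc a))) / of_nat p ^ m - hw p j a N)"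
    by blast
qed

end
end

definition lam :: "nat \<Rightarrow> rat \<Rightarrow> rat" where
  "lam N z = (\<Sum>l = 1..N. (-1) ^ (l - 1) * z ^ l / of_nat l)"

definition lamd :: "nat \<Rightarrow> rat \<Rightarrow> rat" where
  "lamd N z = (\<Sum>i<N. (- z) ^ i)"

lemma two_v_le: "2 * v \<le> (2::nat) ^ v"
proof (induction v)
  case 0 then show ?case by simp
next
  case (Suc v) then show ?case
    by (cases v) auto
qed

lemma three_v_le: "v \<ge> 1 \<Longrightarrow> v + 2 \<le> (3::nat) ^ v"
proof (induction v)
  case 0 then show ?case by simp
next
  case (Suc v) then show ?case
    by (cases v) auto
qed

lemma lamd_geom: "(1 + z) * lamd N z = 1 - (- z) ^ N"
  unfolding lamd_def by (induction N) (auto simp: algebra_simps)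

context
  fixes p :: nat
  assumes pp: "prime p"
begin

lemma v_le_pow: assumes "l \<ge> 1" shows "p ^ multiplicity p l \<le> l"
  using multiplicity_dvd[of p l] assms by (simp add: dvd_imp_le)

lemma v_half: assumes "l \<ge> 1" shows "2 * multiplicity p l \<le> l"
proof -
  have "2 ^ multiplicity p l \<le> p ^ multiplicity p l"
    using prime_ge_2_nat[OF pp] by (simp add: power_mono)
  then show ?thesis using v_le_pow[OF assms] two_v_le[of "multiplicity p l"] by linarith
qed

lemma v_lt: assumes "l \<ge> 1" shows "multiplicity p l \<le> l - 1"
  using v_half[OF assms] assms by linarith

lemma v_le2: assumes "p \<ge> 3" "i \<ge> 2" shows "multiplicity p i + 2 \<le> i"
proof (cases "multiplicity p i = 0")
  case True then show ?thesis using assms by simp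
next
  case False
  have "3 ^ multiplicity p i \<le> p ^ multiplicity p i" using assms(1) by (simp add: power_mono)
  then show ?thesis using v_le_pow[of i] assms three_v_le[of "multiplicity p i"] False by linarith
qed

lemma inv_nat: assumes "l \<ge> 1" shows "Dp p (- int (multiplicity p l)) (1 / of_nat l)"
proof -
  obtain l' where l': "l = p ^ multiplicity p l * l'" "\<not> p dvd l'"
    using multiplicity_decompose'[of l p] assms pp by (metis not_one_le_zero not_prime_unit)
  have "1 / (of_nat l :: rat) = of_int 1 / of_int (int l') * of_nat p powi (- int (multiplicity p l))"
    apply (subst l'(1)) using pn0[OF pp] by (simp add: power_int_minus field_simps)
  moreover have "\<not> int p dvd int l'" using l'(2) by simp
  ultimately show ?thesis unfolding Dp_def by blast
qed

lemma lam_term_lip: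
  assumes a: "Dp p 1 a" and b: "Dp p 1 b" and ab: "Dp p e (a - b)" and l: "l \<ge> 1"
  shows "Dp p e ((-1) ^ (l - 1) * a ^ l / of_nat l - (-1) ^ (l - 1) * b ^ l / of_nat l)"
proof -
  obtain n where n: "l = Suc n" using l by (cases l) auto
  define S where "S = (\<Sum>i<Suc n. a ^ i * b ^ (n - i))"
  have eq: "a ^ l - b ^ l = (a - b) * S" unfolding S_def n by (rule diff_power_eq_sum)
  have S: "Dp p (int n) S" unfolding S_def
  proof (intro Dp_sum[OF pp])
    fix i assume "i \<in> {..<Suc n}"
    then have "int i * 1 + int (n - i) * 1 = int n" by simp
    then show "Dp p (int n) (a ^ i * b ^ (n - i))"
      using Dp_mult[OF pp Dp_pow[OF pp a, of i] Dp_pow[OF pp b, of "n - i"]] by simp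
  qed auto
  have "Dp p (e + int n + (- int (multiplicity p l))) ((-1) ^ (l - 1) * ((a - b) * S) * (1 / of_nat l))"
    using Dp_mult[OF pp Dp_mult[OF pp Dp_mult[OF pp Dp_int[OF pp, of "(-1) ^ (l - 1)"] ab] S] inv_nat[OF l]]
    by (simp add: mult.assoc)
  moreover have "e + int n + (- int (multiplicity p l)) \<ge> e" using v_lt[OF l] n by simp
  ultimately have "Dp p e ((-1) ^ (l - 1) * ((a - b) * S) * (1 / of_nat l))" using Dp_mono[OF pp] by blast
  moreover have "(-1) ^ (l - 1) * a ^ l / of_nat l - (-1) ^ (l - 1) * b ^ l / of_nat l = (-1) ^ (l - 1) * (a ^ l - b ^ l) * (1 / of_nat l)"
    by (simp add: right_diff_distrib diff_divide_distrib)
  then have "(-1) ^ (l - 1) * a ^ l / of_nat l - (-1) ^ (l - 1) * b ^ l / of_nat l = (-1) ^ (l - 1) * ((a - b) * S) * (1 / of_nat l)"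
    by (simp only: eq)
  ultimately show ?thesis by simp
qed

lemma lam_lip:
  assumes a: "Dp p 1 a" and b: "Dp p 1 b" and ab: "Dp p e (a - b)"
  shows "Dp p e (lam N a - lam N b)"
  unfolding lam_def sum_subtractf[symmetric]
  by (intro Dp_sum[OF pp] lam_term_lip[OF a b ab]) auto

lemma lam_tail:
  assumes a: "Dp p 1 a" and NN: "N \<le> N'" and E: "2 * E \<le> int N"
  shows "Dp p E (lam N' a - lam N a)"
proof -
  obtain d where d: "N' = N + d" using NN le_Suc_ex by blast
  have "lam N' a = lam N a + (\<Sum>l = Suc N..N'. (-1) ^ (l - 1) * a ^ l / of_nat l)"
    unfolding lam_def d using sum.ub_add_nat[of 1 N "\<lambda>l. (-1) ^ (l - 1) * a ^ l / of_nat l" d] by simp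
  moreover have "Dp p E (\<Sum>l = Suc N..N'. (-1) ^ (l - 1) * a ^ l / of_nat l)"
  proof (intro Dp_sum[OF pp])
    fix l assume "l \<in> {Suc N..N'}"
    then have l: "l \<ge> 1" "l \<ge> Suc N" by auto
    have "Dp p (0 + int l * 1 + - int (multiplicity p l)) ((-1) ^ (l - 1) * a ^ l * (1 / of_nat l))"
      using Dp_mult[OF pp Dp_mult[OF pp Dp_int[OF pp, of "(-1) ^ (l - 1)"] Dp_pow[OF pp a, of l]] inv_nat[OF l(1)]]
      by simp
    moreover have "0 + int l * 1 + - int (multiplicity p l) \<ge> E" using v_half[OF l(1)] l E by linarith
    ultimately show "Dp p E ((-1) ^ (l - 1) * a ^ l / of_nat l)" using Dp_mono[OF pp] by fastforce
  qed auto
  ultimately show ?thesis by simp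
qed

end

lemma neg_pow: "(- z) ^ N = (-1) ^ N * (z::rat) ^ N"
proof -
  have "(- z) ^ N = ((-1) * z) ^ N" by simp
  also have "\<dots> = (-1) ^ N * z ^ N" by (rule power_mult_distrib)
  finally show ?thesis .
qed

lemma lamd_alt: "lamd N z = (\<Sum>l = 1..N. (-1) ^ (l - 1) * z ^ (l - 1))"
proof (induction N)
  case 0 then show ?case by (simp add: lamd_def)
next
  case (Suc N)
  have "lamd (Suc N) z = lamd N z + (- z) ^ N" by (simp add: lamd_def)
  also have "(- z) ^ N = (-1) ^ (Suc N - 1) * z ^ (Suc N - 1)" by (subst neg_pow) simp
  also have "lamd N z = (\<Sum>l = 1..N. (-1) ^ (l - 1) * z ^ (l - 1))" by (rule Suc.IH)
  also have "(\<Sum>l = 1..N. (-1) ^ (l - 1) * z ^ (l - 1)) + (-1) ^ (Suc N - 1) * z ^ (Suc N - 1) =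
     (\<Sum>l = 1..Suc N. (-1) ^ (l - 1) * z ^ (l - 1))" by (simp only: sum.cl_ivl_Suc) simp
  finally show ?case .
qed
lemma binom_expand:
  fixes z d :: rat
  assumes "l \<ge> 1"
  shows "((z + d) ^ l - z ^ l) / of_nat l - z ^ (l - 1) * d =
         (\<Sum>k = 2..l. of_nat (l choose k) / of_nat l * d ^ k * z ^ (l - k))"
proof -
  have "(z + d) ^ l = (d + z) ^ l" by (simp add: add.commute)
  also have "\<dots> = (\<Sum>k\<le>l. of_nat (l choose k) * d ^ k * z ^ (l - k))" by (rule binomial_ring)
  also have "\<dots> = (\<Sum>k = 0..l. of_nat (l choose k) * d ^ k * z ^ (l - k))" by (simp add: atMost_atLeast0)
  also have "\<dots> = z ^ l + (of_nat l * d * z ^ (l - 1) + (\<Sum>k = 2..l. of_nat (l choose k) * d ^ k * z ^ (l - k)))"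
  proof -
    let ?f = "\<lambda>k. of_nat (l choose k) * d ^ k * z ^ (l - k)"
    have "sum ?f {0..l} = ?f 0 + sum ?f {Suc 0..l}" by (rule sum.atLeast_Suc_atMost) simp
    also have "sum ?f {Suc 0..l} = ?f (Suc 0) + sum ?f {Suc (Suc 0)..l}" using assms by (intro sum.atLeast_Suc_atMost) simp
    finally show ?thesis by (simp add: numeral_2_eq_2)
  qed
  finally have e: "(z + d) ^ l - z ^ l = of_nat l * d * z ^ (l - 1) + (\<Sum>k = 2..l. of_nat (l choose k) * d ^ k * z ^ (l - k))"
    by simp
  have l0: "(of_nat l :: rat) \<noteq> 0" using assms by simp
  define S where "S = (\<Sum>k = 2..l. of_nat (l choose k) * d ^ k * z ^ (l - k))"
  have "(of_nat l * d * z ^ (l - 1) + S) / of_nat l - z ^ (l - 1) * d = S / of_nat l"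
    using l0 by (simp add: field_simps)
  also have "\<dots> = (\<Sum>k = 2..l. of_nat (l choose k) / of_nat l * d ^ k * z ^ (l - k))"
    unfolding S_def sum_divide_distrib by (rule sum.cong[OF refl]) simp
  finally show ?thesis unfolding e S_def .
qed

context
  fixes p :: nat
  assumes pp: "prime p" and p3: "p \<ge> 3"
begin

lemma binom_term:
  assumes z: "Dp p 1 z" and dl: "Dp p e d" and e: "e \<ge> 1" and k: "2 \<le> k" "k \<le> l"
  shows "Dp p (2 * e) (of_nat (l choose k) / of_nat l * d ^ k * z ^ (l - k))"
proof -
  have kl: "of_nat k * of_nat (l choose k) = (of_nat l * of_nat ((l - 1) choose (k - 1)) :: rat)"
  proof -
    have "k * (l choose k) = l * ((l - 1) choose (k - 1))" using times_binomial_minus1_eq[of k l] k by simp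
    then have "(of_nat (k * (l choose k)) :: rat) = of_nat (l * ((l - 1) choose (k - 1)))" by (simp only:)
    then show ?thesis by (simp only: of_nat_mult)
  qed
  have l0: "(of_nat l :: rat) \<noteq> 0" and k0: "(of_nat k :: rat) \<noteq> 0" using k by auto
  have "of_nat (l choose k) / of_nat l = (of_nat ((l - 1) choose (k - 1)) * (1 / of_nat k) :: rat)"
    using kl l0 k0 by (simp add: field_simps)
  then have eq: "of_nat (l choose k) / of_nat l * d ^ k * z ^ (l - k) =
     of_nat ((l - 1) choose (k - 1)) * (1 / of_nat k) * d ^ k * z ^ (l - k)" by simp
  have "Dp p (0 + - int (multiplicity p k) + int k * e + int (l - k) * 1)
     (of_nat ((l - 1) choose (k - 1)) * (1 / of_nat k) * d ^ k * z ^ (l - k))"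
  proof -
    have k1: "k \<ge> 1" using k by simp
    show ?thesis
      by (rule Dp_mult[OF pp Dp_mult[OF pp Dp_mult[OF pp Dp_nat[OF pp] inv_nat[OF pp k1]] Dp_pow[OF pp dl]] Dp_pow[OF pp z]])
  qed
  moreover have "0 + - int (multiplicity p k) + int k * e + int (l - k) * 1 \<ge> 2 * e"
  proof -
    have "int (multiplicity p k) + 2 \<le> int k" using v_le2[OF pp p3 k(1)] by linarith
    moreover have "int k * e \<ge> 2 * e + (int k - 2)"
    proof -
      have "(int k - 2) * e \<ge> (int k - 2) * 1" using e k by (intro mult_left_mono) auto
      then show ?thesis by (simp add: algebra_simps)
    qed
    ultimately show ?thesis by simp
  qed
  ultimately show ?thesis unfolding eq using Dp_mono[OF pp] by blast
qed

lemma lam_taylor: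
  assumes z: "Dp p 1 z" and dl: "Dp p e d" and e: "e \<ge> 1"
  shows "Dp p (2 * e) (lam N (z + d) - lam N z - d * lamd N z)"
proof -
  have "lam N (z + d) - lam N z - d * lamd N z =
     (\<Sum>l = 1..N. (-1) ^ (l - 1) * (((z + d) ^ l - z ^ l) / of_nat l - z ^ (l - 1) * d))"
    unfolding lam_def lamd_alt sum_distrib_left sum_subtractf[symmetric]
    by (rule sum.cong[OF refl]) (simp add: algebra_simps diff_divide_distrib)
  also have "\<dots> = (\<Sum>l = 1..N. (-1) ^ (l - 1) * (\<Sum>k = 2..l. of_nat (l choose k) / of_nat l * d ^ k * z ^ (l - k)))"
  proof (rule sum.cong[OF refl])
    fix l assume "l \<in> {1..N}"
    then have l1: "l \<ge> 1" by simp
    show "(-1) ^ (l - 1) * (((z + d) ^ l - z ^ l) / of_nat l - z ^ (l - 1) * d) =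
      (-1) ^ (l - 1) * (\<Sum>k = 2..l. of_nat (l choose k) / of_nat l * d ^ k * z ^ (l - k))"
      by (simp only: binom_expand[OF l1])
  qed
  finally have eq: "lam N (z + d) - lam N z - d * lamd N z = \<dots>" .
  show ?thesis unfolding eq
  proof (intro Dp_sum[OF pp])
    fix l assume "l \<in> {1..N}"
    have "Dp p (2 * e) (\<Sum>k = 2..l. of_nat (l choose k) / of_nat l * d ^ k * z ^ (l - k))"
      by (intro Dp_sum[OF pp] binom_term[OF z dl e]) auto
    from Dp_mult[OF pp Dp_int[OF pp, of "(-1) ^ (l - 1)"] this]
    show "Dp p (2 * e) ((-1) ^ (l - 1) * (\<Sum>k = 2..l. of_nat (l choose k) / of_nat l * d ^ k * z ^ (l - k)))" by simp
  qed auto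
qed

end

context
  fixes p :: nat
  assumes pp: "prime p" and p3: "p \<ge> 3"
begin

lemma pc_crit2:
  assumes "\<And>E. \<exists>M. \<forall>N\<ge>M. \<forall>N'\<ge>N. Dp p E (X N' - X N)"
  shows "pc p X"
  unfolding pc_def
proof
  fix E
  obtain M where M: "\<forall>N\<ge>M. \<forall>N'\<ge>N. Dp p E (X N' - X N)" using assms by blast
  have "\<forall>m\<ge>M. \<forall>k\<ge>M. Dp p E (X m - X k)"
  proof (intro allI impI)
    fix m k assume "m \<ge> M" "k \<ge> M"
    show "Dp p E (X m - X k)"
    proof (cases "k \<le> m")
      case True then show ?thesis using M \<open>k \<ge> M\<close> by blast
    next
      case False
      then have "Dp p E (X k - X m)" using M \<open>m \<ge> M\<close> by simp
      then show ?thesis using Dp_uminus[OF pp] by (metis minus_diff_eq)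
    qed
  qed
  then show "\<exists>M. \<forall>m\<ge>M. \<forall>k\<ge>M. Dp p E (X m - X k)" by blast
qed

context
  fixes j :: nat
  assumes pj: "\<not> p dvd j"
begin

definition QQ :: "nat \<Rightarrow> rat" where "QQ n = of_nat (qq p j n)"
definition om :: "nat \<Rightarrow> rat" where "om N = of_nat j ^ (p ^ N)"
definition YY :: "nat \<Rightarrow> nat \<Rightarrow> rat" where "YY N n = QQ n / QQ n ^ (p ^ N)"
definition zz :: "nat \<Rightarrow> nat \<Rightarrow> rat" where "zz N n = QQ n / om N - 1"

lemma QQ0: "QQ n \<noteq> 0" unfolding QQ_def using q_nz[OF pp pj] by simp
lemma om0: "om N \<noteq> 0" unfolding om_def using pj by (metis dvd_0_right of_nat_eq_0_iff power_eq_0_iff)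
lemma om_unit: "Dp p 0 (1 / om N)"
proof -
  have "\<not> int p dvd int j ^ (p ^ N)" using pj pint[OF pp]
    by (metis int_dvd_int_iff prime_dvd_power pp)
  from Dp_inv_unit[OF pp this] show ?thesis unfolding om_def by simp
qed
lemma QQ_unit: "Dp p 0 (1 / QQ n ^ b)"
  using Dp_inv_unit[OF pp q_unit[OF pp pj, of n b]] unfolding QQ_def by simp

lemma LL_eq: "plog p (pangle p (of_nat n + of_nat j / of_nat p)) N = lam N (YY N n - 1)"
  unfolding plog_def lam_def YY_def QQ_def pangle_x[OF pp pj] ..

lemma cong_jq: "[j = qq p j n] (mod p)" using qq_cong[OF pp pj] by (simp add: cong_sym_eq)

lemma zz_D1: "Dp p 1 (zz N n)"
proof -
  have "Dp p (int 0 + 1) ((of_nat j ^ (p ^ N)) ^ 1 - (of_nat (qq p j n) ^ (p ^ 0)) ^ 1)"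
    by (rule Omega_diff[OF pp pj cong_jq]) simp
  then have "Dp p 1 (om N - QQ n)" unfolding om_def QQ_def by simp
  from Dp_mult[OF pp Dp_uminus[OF pp this] om_unit[of N]]
  show ?thesis unfolding zz_def using om0[of N] by (simp add: field_simps)
qed

lemma YY_zz: "Dp p (int N + 1) (YY N n - 1 - zz N n)"
proof -
  have "Dp p (int N + 1) ((of_nat j ^ (p ^ N)) ^ 1 - (of_nat (qq p j n) ^ (p ^ N)) ^ 1)"
    by (rule Omega_diff[OF pp pj cong_jq]) simp
  then have A: "Dp p (int N + 1) (om N - QQ n ^ (p ^ N))" unfolding om_def QQ_def by simp
  have "Dp p (0 + (int N + 1) + 0 + 0) (QQ n * (om N - QQ n ^ (p ^ N)) * (1 / QQ n ^ (p ^ N)) * (1 / om N))"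
    by (rule Dp_mult[OF pp Dp_mult[OF pp Dp_mult[OF pp _ A] QQ_unit] om_unit])
       (simp add: QQ_def Dp_nat[OF pp])
  moreover have "QQ n * (om N - QQ n ^ (p ^ N)) * (1 / QQ n ^ (p ^ N)) * (1 / om N) = YY N n - 1 - zz N n"
    unfolding YY_def zz_def using QQ0[of n] om0[of N] by (simp add: field_simps)
  ultimately show ?thesis by simp
qed

lemma YY_D1: "Dp p 1 (YY N n - 1)"
proof -
  have "Dp p 1 (YY N n - 1 - zz N n)" using Dp_mono[OF pp _ YY_zz] by simp
  from Dp_add[OF pp this zz_D1[of N n]] show ?thesis by simp
qed

lemma LL_lam: "Dp p (int N + 1) (lam N (YY N n - 1) - lam N (zz N n))"
  by (rule lam_lip[OF pp YY_D1 zz_D1 YY_zz])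

lemma zz_shift: "zz N (n + h) - zz N n = of_nat p * of_nat h / om N"
  unfolding zz_def QQ_def qq_def by (simp add: algebra_simps add_divide_distrib)

lemma lamd_eval: "(of_nat p * of_nat h / om N) * lamd N (zz N n) = of_nat p * of_nat h * (1 - (- zz N n) ^ N) / QQ n"
proof -
  have "(1 + zz N n) * lamd N (zz N n) = 1 - (- zz N n) ^ N" by (rule lamd_geom)
  moreover have "1 + zz N n = QQ n / om N" unfolding zz_def by simp
  ultimately have L: "lamd N (zz N n) = (1 - (- zz N n) ^ N) * om N / QQ n"
    using QQ0[of n] om0[of N] by (simp add: field_simps)
  show ?thesis unfolding L using om0[of N] QQ0[of n] by (simp add: field_simps)
qed

lemma LL_deriv:
  assumes E1: "E \<le> int N + 1 - int m" and E2: "E \<le> int m + 2"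
  shows "Dp p E ((lam N (YY N (n + p ^ m) - 1) - lam N (YY N n - 1)) / of_nat p ^ m - of_nat p / QQ n)"
proof -
  let ?h = "p ^ m"
  define A1 where "A1 = lam N (YY N (n + ?h) - 1) - lam N (zz N (n + ?h))"
  define A0 where "A0 = lam N (YY N n - 1) - lam N (zz N n)"
  define dl where "dl = zz N (n + ?h) - zz N n"
  define B where "B = lam N (zz N (n + ?h)) - lam N (zz N n) - dl * lamd N (zz N n)"
  have dl_eq: "dl = of_nat p * of_nat ?h / om N" unfolding dl_def by (rule zz_shift)
  have dlD: "Dp p (int m + 1) dl"
  proof -
    have "Dp p (1 + int m + 0) (of_nat p * of_nat ?h * (1 / om N))"
      using Dp_mult[OF pp Dp_mult[OF pp Dp_ppow[OF pp, of 1] Dp_ppow[OF pp, of "int m"]] om_unit[of N]]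
      by (simp add: power_int_def)
    then show ?thesis unfolding dl_eq by (simp add: add.commute)
  qed
  have BD: "Dp p (2 * (int m + 1)) B"
  proof -
    have "zz N (n + ?h) = zz N n + dl" unfolding dl_def by simp
    then show ?thesis unfolding B_def using lam_taylor[OF pp p3 zz_D1 dlD] by simp
  qed
  have dlam: "dl * lamd N (zz N n) = of_nat p * of_nat ?h * (1 - (- zz N n) ^ N) / QQ n"
    unfolding dl_eq by (rule lamd_eval)
  then have eq: "(lam N (YY N (n + ?h) - 1) - lam N (YY N n - 1)) / of_nat p ^ m - of_nat p / QQ n
     = (A1 - A0) / of_nat p ^ m + B / of_nat p ^ m - of_nat p * (- zz N n) ^ N * (1 / QQ n)"
    unfolding A1_def A0_def B_def dlam using QQ0[of n] pn0[OF pp]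
    by (simp add: field_simps)
  have 1: "Dp p E ((A1 - A0) / of_nat p ^ m)"
  proof -
    have "Dp p (int N + 1) (A1 - A0)" unfolding A1_def A0_def using Dp_diff[OF pp LL_lam LL_lam] by simp
    from Dp_div_ppow[OF pp this, of m] show ?thesis using Dp_mono[OF pp] E1 by simp
  qed
  have 2: "Dp p E (B / of_nat p ^ m)"
    using Dp_div_ppow[OF pp BD, of m] Dp_mono[OF pp] E2 by simp
  have 3: "Dp p E (of_nat p * (- zz N n) ^ N * (1 / QQ n))"
  proof -
    have "Dp p (1 + int N * 1 + 0) (of_nat p * (- zz N n) ^ N * (1 / QQ n))"
      using Dp_mult[OF pp Dp_mult[OF pp Dp_ppow[OF pp, of 1] Dp_pow[OF pp Dp_uminus[OF pp zz_D1]]] QQ_unit[of n 1]]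
      by simp
    moreover have "E \<le> 1 + int N * 1 + 0" using E1 by simp
    ultimately show ?thesis using Dp_mono[OF pp] by blast
  qed
  show ?thesis unfolding eq by (intro Dp_diff[OF pp] Dp_add[OF pp] 1 2 3)
qed

lemma LL_pc: "pc p (\<lambda>N. lam N (YY N n - 1))"
proof (rule pc_crit2)
  fix E
  have "\<forall>N\<ge>nat (2 * E + 1). \<forall>N'\<ge>N. Dp p E (lam N' (YY N' n - 1) - lam N (YY N n - 1))"
  proof (intro allI impI)
    fix N N' assume N: "N \<ge> nat (2 * E + 1)" and NN: "N' \<ge> N"
    have t: "Dp p E (lam N' (YY N' n - 1) - lam N (YY N' n - 1))"
      by (rule lam_tail[OF pp YY_D1 NN]) (use N in linarith)
    have "Dp p (int N + 1) (QQ n ^ (p ^ N') ^ 1 - QQ n ^ (p ^ N) ^ 1)"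
      unfolding QQ_def using Omega_diff[OF pp q_unit[OF pp pj, of n 1, simplified] cong_refl NN, of 1] by simp
    then have "Dp p (0 + (int N + 1) + 0 + 0) (QQ n * (QQ n ^ (p ^ N') - QQ n ^ (p ^ N)) * (1 / QQ n ^ (p ^ N)) * (1 / QQ n ^ (p ^ N')))"
      by (intro Dp_mult[OF pp] QQ_unit) (simp_all add: QQ_def Dp_nat[OF pp])
    moreover have "QQ n * (QQ n ^ (p ^ N') - QQ n ^ (p ^ N)) * (1 / QQ n ^ (p ^ N)) * (1 / QQ n ^ (p ^ N')) = (YY N n - 1) - (YY N' n - 1)"
      unfolding YY_def using QQ0[of n] by (simp add: field_simps)
    ultimately have "Dp p (int N + 1) ((YY N n - 1) - (YY N' n - 1))" by simp
    then have "Dp p (int N + 1) ((YY N' n - 1) - (YY N n - 1))" using Dp_uminus[OF pp] by (metis minus_diff_eq)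
    then have "Dp p (int N + 1) (lam N (YY N' n - 1) - lam N (YY N n - 1))" by (rule lam_lip[OF pp YY_D1 YY_D1])
    moreover have "E \<le> int N + 1" using N by linarith
    ultimately have "Dp p E (lam N (YY N' n - 1) - lam N (YY N n - 1))" using Dp_mono[OF pp] by blast
    from Dp_add[OF pp t this] show "Dp p E (lam N' (YY N' n - 1) - lam N (YY N n - 1))" by simp
  qed
  then show "\<exists>M. \<forall>N\<ge>M. \<forall>N'\<ge>N. Dp p E (lam N' (YY N' n - 1) - lam N (YY N n - 1))" by blast
qed

end
end

lemma poch_le: fixes a :: rat assumes "a \<ge> 0" shows "pochhammer a n \<le> (a + of_nat n) ^ n"
proof (induction n)
  case 0 then show ?case by simp
next
  case (Suc n)
  have "pochhammer a (Suc n) = pochhammer a n * (a + of_nat n)" by (rule pochhammer_Suc)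
  also have "\<dots> \<le> (a + of_nat n) ^ n * (a + of_nat n)"
    using Suc assms by (intro mult_right_mono) auto
  also have "\<dots> \<le> (a + of_nat (Suc n)) ^ n * (a + of_nat (Suc n))"
    using assms by (intro mult_mono power_mono) auto
  finally have "pochhammer a (Suc n) \<le> (a + of_nat (Suc n)) ^ n * (a + of_nat (Suc n))" .
  then show ?case by (simp only: power_Suc2)
qed

lemma poch_nn: fixes a :: rat assumes "a \<ge> 0" shows "pochhammer a n \<ge> 0"
  using assms by (induction n) (auto simp: pochhammer_Suc)

lemma poch_ge: fixes a :: rat assumes "a \<ge> 0" shows "a ^ n \<le> pochhammer a n"
proof (induction n)
  case 0 then show ?case by simp
next
  case (Suc n)
  have "a ^ Suc n = a ^ n * a" by simp
  also have "\<dots> \<le> pochhammer a n * (a + of_nat n)"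
    using Suc assms poch_nn[OF assms, of n] by (intro mult_mono) auto
  finally show ?case by (simp add: pochhammer_Suc)
qed

lemma tRn_bound:
  fixes t :: rat
  assumes p1: "p \<ge> 1" and t: "t \<ge> of_nat n + 1"
    and ex: "M0 p s + 2 + n * (p - 1) \<le> (n + 1) * (p - 1 + s)"
  shows "\<bar>t * Rn p s n t\<bar> \<le> of_nat p ^ (p * n) * fact n ^ s * 2 ^ (n * (p - 1)) / t"
proof -
  define K where "K = p - 1 + s"
  define A :: rat where "A = of_nat p ^ (p * n) * fact n ^ s"
  define P where "P = (\<Prod>j = 1..p - 1. pochhammer (t + of_nat j / of_nat p) n)"
  define D where "D = pochhammer t (n + 1) ^ K"
  have t1: "t \<ge> 1" and t0: "t > 0" using t by auto
  have A0: "A \<ge> 0" unfolding A_def by simp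
  have P0: "P \<ge> 0" unfolding P_def using t0
    by (intro prod_nonneg pochhammer_nonneg) (auto intro: add_pos_nonneg)
  have PB: "P \<le> (2 * t) ^ (n * (p - 1))"
  proof -
    have "P \<le> (\<Prod>j = 1..p - 1. (2 * t) ^ n)" unfolding P_def
    proof (intro prod_mono conjI)
      fix j assume j: "j \<in> {1..p - 1}"
      have jp: "of_nat j / of_nat p \<le> (1::rat)" using j by (auto simp: divide_le_eq_1)
      have a0: "t + of_nat j / of_nat p \<ge> 0" using t0 by (simp add: add_nonneg_nonneg)
      show "0 \<le> pochhammer (t + of_nat j / of_nat p) n" using t0 by (intro pochhammer_nonneg) (auto intro: add_pos_nonneg)
      have "pochhammer (t + of_nat j / of_nat p) n \<le> (t + of_nat j / of_nat p + of_nat n) ^ n" by (rule poch_le[OF a0])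
      also have "\<dots> \<le> (2 * t) ^ n" using jp t a0 by (intro power_mono) auto
      finally show "pochhammer (t + of_nat j / of_nat p) n \<le> (2 * t) ^ n" .
    qed
    also have "\<dots> = (2 * t) ^ (n * (p - 1))" by (simp add: power_mult)
    finally show ?thesis .
  qed
  have DB: "D \<ge> t ^ ((n + 1) * K)" unfolding D_def
  proof -
    have "t ^ (n + 1) \<le> pochhammer t (n + 1)" by (rule poch_ge) (use t0 in simp)
    then have "(t ^ (n + 1)) ^ K \<le> pochhammer t (n + 1) ^ K" by (intro power_mono) (use t0 in auto)
    moreover have "(t ^ (n + 1)) ^ K = t ^ ((n + 1) * K)" by (rule power_mult[symmetric])
    ultimately show "t ^ ((n + 1) * K) \<le> pochhammer t (n + 1) ^ K" by simp
  qed
  have tpos: "t ^ ((n + 1) * K) > 0" using t0 by simp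
  have D0: "D > 0" using DB tpos by linarith
  have eq: "t * Rn p s n t = A * t ^ (M0 p s + 1) * P / D"
    unfolding Rn_def A_def P_def D_def K_def by (simp add: algebra_simps)
  have nn: "A * t ^ (M0 p s + 1) * P / D \<ge> 0" using A0 P0 D0 t0 by simp
  have "A * t ^ (M0 p s + 1) * P / D \<le> A * t ^ (M0 p s + 1) * (2 * t) ^ (n * (p - 1)) / t ^ ((n + 1) * K)"
    using A0 P0 PB DB D0 t0 tpos by (intro frac_le mult_left_mono mult_nonneg_nonneg) auto
  also have "\<dots> = A * 2 ^ (n * (p - 1)) * t ^ (M0 p s + 1 + n * (p - 1)) / t ^ ((n + 1) * K)"
    by (simp add: power_mult_distrib power_add)
  also have "\<dots> \<le> A * 2 ^ (n * (p - 1)) * t ^ ((n + 1) * K - 1) / t ^ ((n + 1) * K)"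
    using ex t1 A0 tpos unfolding K_def by (intro divide_right_mono mult_left_mono power_increasing) auto
  also have "\<dots> = A * 2 ^ (n * (p - 1)) / t"
  proof -
    have "(n + 1) * K \<ge> 1" using ex unfolding K_def by linarith
    then have "t ^ ((n + 1) * K) = t ^ ((n + 1) * K - 1) * t" by (metis Suc_diff_1 less_le_trans zero_less_one power_Suc2)
    then show ?thesis using t0 by (simp add: field_simps)
  qed
  finally have fin: "A * t ^ (M0 p s + 1) * P / D \<le> A * 2 ^ (n * (p - 1)) / t" .
  have absX: "\<bar>A * t ^ (M0 p s + 1) * P / D\<bar> = A * t ^ (M0 p s + 1) * P / D" using nn by (rule abs_of_nonneg)
  have "\<bar>t * Rn p s n t\<bar> \<le> A * 2 ^ (n * (p - 1)) / t" unfolding eq by (rule order_trans[OF eq_refl[OF absX] fin])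
  then show ?thesis unfolding A_def .
qed


lemma term_bound:
  fixes t :: rat and c :: rat
  assumes t: "t \<ge> 1" and k: "k \<ge> 1" and i: "i \<ge> 1"
  shows "\<bar>c * t / (t + of_nat k) ^ i - (if i = 1 then c else 0)\<bar> \<le> \<bar>c\<bar> * of_nat k / t"
proof (cases "i = 1")
  case True
  have tk: "t + of_nat k > 0" using t by simp
  have "c * t / (t + of_nat k) - c = - (c * of_nat k / (t + of_nat k))" using tk by (simp add: field_simps)
  then have "\<bar>c * t / (t + of_nat k) ^ i - (if i = 1 then c else 0)\<bar> = \<bar>c\<bar> * of_nat k / (t + of_nat k)"
    using True tk by (simp add: abs_mult)
  also have "\<dots> \<le> \<bar>c\<bar> * of_nat k / t" using t tk by (intro divide_left_mono mult_nonneg_nonneg) auto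
  finally show ?thesis .
next
  case False
  then have i2: "i \<ge> 2" using i by simp
  have tk: "t + of_nat k \<ge> 1" using t by simp
  have "(t + of_nat k) ^ i \<ge> (t + of_nat k) ^ 2" using tk i2 by (intro power_increasing) auto
  moreover have "(t + of_nat k) ^ 2 \<ge> t * t" using t by (simp add: power2_eq_square mult_mono)
  ultimately have big: "(t + of_nat k) ^ i \<ge> t * t" by linarith
  have tt: "t * t > 0" using t by simp
  have "t / (t + of_nat k) ^ i \<le> t / (t * t)" using big tt t by (intro divide_left_mono) auto
  also have "\<dots> = 1 / t" using t by simp
  also have "\<dots> \<le> of_nat k / t" using k t by (intro divide_right_mono) auto
  finally have b: "t / (t + of_nat k) ^ i \<le> of_nat k / t" .
  have nn: "t / (t + of_nat k) ^ i \<ge> 0" using t tk by simp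
  have "\<bar>c * t / (t + of_nat k) ^ i - (if i = 1 then c else 0)\<bar> = \<bar>c\<bar> * (t / (t + of_nat k) ^ i)"
  proof -
    have a1: "\<bar>t\<bar> = t" using t by simp
    have a2: "\<bar>(t + of_nat k) ^ i\<bar> = (t + of_nat k) ^ i" using tk by simp
    show ?thesis using False by (simp add: abs_mult a1 a2)
  qed
  also have "\<dots> \<le> \<bar>c\<bar> * (of_nat k / t)" using b by (intro mult_left_mono) auto
  finally show ?thesis by simp
qed

lemma res_zero:
  fixes r :: "nat \<Rightarrow> nat \<Rightarrow> rat"
  assumes p2: "p \<ge> 2"
    and ex: "M0 p s + 2 + n * (p - 1) \<le> (n + 1) * (p - 1 + s)"
    and pfd: "\<And>t::rat. (\<forall>k\<in>{0..n}. t \<noteq> - of_nat k) \<Longrightarrow>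
               Rn p s n t = (\<Sum>i=1..p-1+s. \<Sum>k=1..n. r i k / (t + of_nat k) ^ i)"
  shows "(\<Sum>k=1..n. r 1 k) = 0"
proof (rule ccontr)
  define K where "K = p - 1 + s"
  define \<sigma> where "\<sigma> = (\<Sum>k=1..n. r 1 k)"
  define B :: rat where "B = of_nat p ^ (p * n) * fact n ^ s * 2 ^ (n * (p - 1))"
  define C where "C = (\<Sum>i=1..K. \<Sum>k=1..n. \<bar>r i k\<bar> * of_nat k)"
  assume "(\<Sum>k=1..n. r 1 k) \<noteq> 0"
  then have s0: "\<bar>\<sigma>\<bar> > 0" unfolding \<sigma>_def by simp
  have K1: "1 \<in> {1..K}" unfolding K_def using p2 by simp
  have sig: "\<sigma> = (\<Sum>i=1..K. \<Sum>k=1..n. (if i = 1 then r i k else 0))"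
  proof -
    have "(\<Sum>i=1..K. \<Sum>k=1..n. (if i = 1 then r i k else 0)) = (\<Sum>i=1..K. if i = 1 then (\<Sum>k=1..n. r i k) else 0)"
      by (rule sum.cong) auto
    also have "\<dots> = (\<Sum>k=1..n. r 1 k)" using K1 by (simp add: sum.delta)
    finally show ?thesis unfolding \<sigma>_def by simp
  qed
  have main: "\<bar>\<sigma>\<bar> \<le> (B + C) / of_nat T" if T: "T \<ge> n + 1" for T :: nat
  proof -
    define t :: rat where "t = of_nat T"
    have t1: "t \<ge> 1" and tn: "t \<ge> of_nat n + 1" unfolding t_def using T by auto
    have dom: "\<forall>k\<in>{0..n}. t \<noteq> - of_nat k" using t1 by auto
    have "t * Rn p s n t = (\<Sum>i=1..K. \<Sum>k=1..n. r i k * t / (t + of_nat k) ^ i)"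
      unfolding pfd[OF dom] K_def by (simp add: sum_distrib_left algebra_simps)
    then have d: "t * Rn p s n t - \<sigma> = (\<Sum>i=1..K. \<Sum>k=1..n. (r i k * t / (t + of_nat k) ^ i - (if i = 1 then r i k else 0)))"
      unfolding sig by (simp add: sum_subtractf)
    have "\<bar>t * Rn p s n t - \<sigma>\<bar> \<le> (\<Sum>i=1..K. \<Sum>k=1..n. \<bar>r i k\<bar> * of_nat k / t)"
      unfolding d
      by (rule order_trans[OF sum_abs sum_mono], rule order_trans[OF sum_abs sum_mono], rule term_bound[OF t1]) auto
    also have "\<dots> = C / t" unfolding C_def by (simp add: sum_divide_distrib)
    finally have 1: "\<bar>t * Rn p s n t - \<sigma>\<bar> \<le> C / t" .
    have 2: "\<bar>t * Rn p s n t\<bar> \<le> B / t" unfolding B_def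
      by (rule tRn_bound) (use p2 tn ex in auto)
    have "\<bar>\<sigma>\<bar> \<le> \<bar>t * Rn p s n t - \<sigma>\<bar> + \<bar>t * Rn p s n t\<bar>" by linarith
    also have "\<dots> \<le> C / t + B / t" using 1 2 by linarith
    finally show ?thesis unfolding t_def by (simp add: add_divide_distrib add.commute)
  qed
  obtain T :: nat where T: "(B + C) / \<bar>\<sigma>\<bar> < of_nat T" using reals_Archimedean2 by blast
  define T' where "T' = max T (n + 1)"
  have "\<bar>\<sigma>\<bar> \<le> (B + C) / of_nat T'" using main[of T'] unfolding T'_def by simp
  moreover have "(B + C) / \<bar>\<sigma>\<bar> < of_nat T'" using T unfolding T'_def by (meson le_less_trans max.cobounded1 of_nat_le_iff le_less not_le)
  moreover have "T' > 0" unfolding T'_def by simp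
  ultimately show False using s0 by (simp add: field_simps)
qed


lemma sum_shift_diff:
  fixes f :: "nat \<Rightarrow> rat"
  shows "(\<Sum>k<P. f (k + k')) = (\<Sum>k<P. f k) + (\<Sum>\<nu><k'. (f (P + \<nu>) - f \<nu>))"
proof (induction k')
  case 0 then show ?case by simp
next
  case (Suc k')
  have "(\<Sum>k<Suc P. f (k + k')) = f (0 + k') + (\<Sum>k<P. f (Suc k + k'))" by (rule sum.lessThan_Suc_shift)
  moreover have "(\<Sum>k<Suc P. f (k + k')) = (\<Sum>k<P. f (k + k')) + f (P + k')" by simp
  ultimately have "(\<Sum>k<P. f (k + Suc k')) = (\<Sum>k<P. f (k + k')) + f (P + k') - f k'" by simp
  then show ?case using Suc by simp
qed

lemma T_shift: "T p m (\<lambda>k. f (k + k')) = T p m f + (\<Sum>\<nu><k'. (f (p ^ m + \<nu>) - f \<nu>)) / of_nat p ^ m"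
  unfolding T_def sum_shift_diff by (simp add: add_divide_distrib)

lemma T_sum: "finite A \<Longrightarrow> T p m (\<lambda>k. \<Sum>a\<in>A. f a k) = (\<Sum>a\<in>A. T p m (f a))"
  unfolding T_def by (simp add: sum.swap[of _ A] sum_divide_distrib)

lemma T_cmult': "T p m (\<lambda>k. c * f k) = c * T p m f"
  unfolding T_def by (simp add: sum_distrib_left[symmetric])

lemma T_add': "T p m (\<lambda>k. f k + g k) = T p m f + T p m g"
  unfolding T_def by (simp add: sum.distrib add_divide_distrib)

lemma unif_bound:
  assumes pp0: "prime p" and "finite A" shows "\<exists>e. e \<le> 0 \<and> (\<forall>a\<in>A. Dp p e (f a))"
  using assms(2)
proof (induction A rule: finite_induct)
  case empty then show ?case by (rule exI[of _ 0]) simp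
next
  case (insert a A)
  then obtain e where e: "e \<le> 0" "\<forall>b\<in>A. Dp p e (f b)" by blast
  obtain e' where e': "Dp p e' (f a)" using Dp_exists[OF pp0] by blast
  have "\<forall>b\<in>insert a A. Dp p (min e e') (f b)"
    using e e' Dp_mono[OF pp0] by (metis insert_iff min.cobounded1 min.cobounded2)
  then show ?case using e by (intro exI[of _ "min e e'"]) auto
qed


definition gi :: "nat \<Rightarrow> nat \<Rightarrow> nat \<Rightarrow> nat \<Rightarrow> rat" where
  "gi p j i m = 1 / ((1 - of_nat i) * (of_nat m + of_nat j / of_nat p) ^ (i - 1))"

definition Lam :: "nat \<Rightarrow> nat \<Rightarrow> nat \<Rightarrow> nat \<Rightarrow> rat" where
  "Lam p j N m = lam N (YY p j N m - 1)"

context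
  fixes p j :: nat
  assumes pp: "prime p" and p3: "p \<ge> 3" and pj: "\<not> p dvd j"
begin

lemma xq: "(of_nat m + of_nat j / of_nat p :: rat) = of_nat (qq p j m) / of_nat p"
  unfolding qq_def using pn0[OF pp] by (simp add: field_simps)

lemma Rtilde_rw:
  "Rtilde p s n r (of_nat k + of_nat j / of_nat p) N =
     (\<Sum>k'=1..n. r 1 k' * Lam p j N (k + k')) + (\<Sum>i=2..p-1+s. \<Sum>k'=1..n. r i k' * gi p j i (k + k'))"
proof -
  have e: "of_nat k + of_nat j / of_nat p + of_nat k' = (of_nat (k + k') + of_nat j / of_nat p :: rat)" for k'
    by simp
  show ?thesis unfolding Rtilde_def e Lam_def LL_eq[OF pp p3 pj] gi_def by simp
qed

lemma inv_x_pow: "1 / (of_nat m + of_nat j / of_nat p) ^ i = of_nat p ^ i * uu p j i m"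
  unfolding xq uu_def using pn0[OF pp] q_nz[OF pp pj, of m] by (simp add: power_divide)

lemma gi_uu: "gi p j i m = (of_nat p ^ (i - 1) / (1 - of_nat i)) * uu p j (i - 1) m"
  unfolding gi_def xq uu_def using pn0[OF pp] by (simp add: power_divide)

lemma gi_deriv:
  assumes i2: "i \<ge> 2"
  shows "Dp p (int m + 2) ((gi p j i (p ^ m + \<nu>) - gi p j i \<nu>) / of_nat p ^ m - 1 / (of_nat \<nu> + of_nat j / of_nat p) ^ i)"
proof -
  define a where "a = i - 1"
  have a1: "a \<ge> 1" and ia: "i = Suc a" using i2 unfolding a_def by auto
  define c :: rat where "c = of_nat p ^ a / (1 - of_nat i)"
  define Er where "Er = uu p j a (\<nu> + p ^ m) - uu p j a \<nu> - of_nat (p ^ m) * ww p j a \<nu>"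
  have ErD: "Dp p (2 * int m + 2) Er" unfolding Er_def by (rule uu_taylor[OF pp pj _ a1]) simp
  have c_eq: "c = - (of_nat p ^ a * (1 / of_nat a))" unfolding c_def ia by (simp add: field_simps)
  have cD: "Dp p 0 c"
  proof -
    have "Dp p (int a + - int (multiplicity p a)) (of_nat p ^ a * (1 / of_nat a))"
      using Dp_mult[OF pp Dp_ppow[OF pp, of "int a"] inv_nat[OF pp a1]] by (simp add: power_int_def)
    moreover have "int a + - int (multiplicity p a) \<ge> 0" using v_lt[OF pp a1] by simp
    ultimately show ?thesis unfolding c_eq using Dp_mono[OF pp] Dp_uminus[OF pp] by blast
  qed
  have a0: "(of_nat a :: rat) \<noteq> 0" using a1 by simp
  have "(gi p j i (p ^ m + \<nu>) - gi p j i \<nu>) / of_nat p ^ m - 1 / (of_nat \<nu> + of_nat j / of_nat p) ^ i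
      = c * Er / of_nat p ^ m"
    unfolding gi_uu inv_x_pow Er_def c_def ww_def using pn0[OF pp] a0
    by (simp add: ia field_simps add.commute)
  moreover have "Dp p (0 + (2 * int m + 2) - int m) (c * Er / of_nat p ^ m)"
    using Dp_div_ppow[OF pp Dp_mult[OF pp cD ErD], of m] by simp
  ultimately show ?thesis by (simp add: algebra_simps)
qed

lemma Lam_deriv:
  assumes E1: "E \<le> int N + 1 - int m" and E2: "E \<le> int m + 2"
  shows "Dp p E ((Lam p j N (p ^ m + \<nu>) - Lam p j N \<nu>) / of_nat p ^ m - 1 / (of_nat \<nu> + of_nat j / of_nat p) ^ 1)"
proof -
  have "1 / (of_nat \<nu> + of_nat j / of_nat p) ^ 1 = (of_nat p / QQ p j \<nu> :: rat)"
    unfolding xq QQ_def[OF pp p3 pj] using pn0[OF pp] q_nz[OF pp pj, of \<nu>] by simp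
  then show ?thesis unfolding Lam_def using LL_deriv[OF pp p3 pj E1 E2, of \<nu>] by (simp add: add.commute)
qed

lemma formula_rw:
  assumes K: "\<And>i. i \<in> A \<Longrightarrow> i \<ge> 2"
  shows "(\<Sum>i\<in>A. c i * (omega p (of_nat j / of_nat p) N) powi (1 - int i) * (hw p j (i - 1) N / (of_nat i - 1)))
       = (\<Sum>i\<in>A. c i * (of_nat p ^ (i - 1) / (of_nat i - 1)) * T p N (uu p j (i - 1)))"
proof (rule sum.cong[OF refl])
  fix i assume "i \<in> A"
  then have ia: "i = Suc (i - 1)" using K by fastforce
  have w0: "(of_nat j ^ (p ^ N) :: rat) \<noteq> 0" using pj by (metis dvd_0_right of_nat_eq_0_iff power_eq_0_iff)
  have "(omega p (of_nat j / of_nat p) N) powi (1 - int i) = of_nat p ^ (i - 1) / (of_nat j ^ (p ^ N)) ^ (i - 1)"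
    using omega_j[OF pp pj, of N "i - 1"] ia by simp
  then show "c i * (omega p (of_nat j / of_nat p) N) powi (1 - int i) * (hw p j (i - 1) N / (of_nat i - 1))
       = c i * (of_nat p ^ (i - 1) / (of_nat i - 1)) * T p N (uu p j (i - 1))"
    unfolding hw_def[OF pp pj] using w0 pj by (simp add: field_simps) (metis dvd_0_right)
qed

end

lemma ex_cond:
  assumes p2: "p \<ge> 2" and s0: "s > 0" and nb: "n > (p + s) ^ 4"
  shows "M0 p s + 2 + n * (p - 1) \<le> (n + 1) * (p - 1 + s)"
proof -
  have K0: "p - 1 + s > 0" using s0 by simp
  have "p ^ N0 p s dvd p - 1 + s" unfolding N0_def by (rule multiplicity_dvd)
  then have a: "p ^ N0 p s \<le> p + s" using K0 by (metis dvd_imp_le le_trans diff_le_self add_le_mono1)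
  have "p ^ (2 + N0 p s) = p * p * p ^ N0 p s" by (simp add: power_add power2_eq_square)
  also have "\<dots> \<le> (p + s) * (p + s) * (p + s)" using a by (intro mult_mono) auto
  also have "\<dots> \<le> (p + s) ^ 4"
  proof -
    have "(p + s) * (p + s) * (p + s) * 1 \<le> (p + s) * (p + s) * (p + s) * (p + s)" using p2 by (intro mult_left_mono) auto
    then show ?thesis by (simp add: power_def numeral_eq_Suc mult.assoc)
  qed
  finally have b: "p ^ (2 + N0 p s) \<le> n" using nb by linarith
  have pos: "p ^ (2 + N0 p s) * s \<ge> 1" using p2 s0 by simp
  have "M0 p s + 2 \<le> p ^ (2 + N0 p s) * s + 1" unfolding M0_def using pos by linarith
  also have "\<dots> \<le> n * s + 1" using b by (intro add_right_mono mult_right_mono) auto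
  finally have c: "M0 p s + 2 \<le> n * s + 1" .
  have "(n + 1) * (q + s) = n * q + n * s + (q + s)" for q by (simp add: algebra_simps)
  then have "(n + 1) * (p - 1 + s) = n * (p - 1) + n * s + (p - 1 + s)" by blast
  then show ?thesis using c K0 by linarith
qed


theorem lemma4p3:
  fixes p s n j :: nat and r :: "nat \<Rightarrow> nat \<Rightarrow> rat"
  assumes "prime p" and "p \<ge> 5" and "s > 0"
    and "n > (p + s) ^ 4"
    and pfd: "\<And>t::rat. (\<forall>k\<in>{0..n}. t \<noteq> - of_nat k) \<Longrightarrow>
               Rn p s n t = (\<Sum>i=1..p-1+s. \<Sum>k=1..n. r i k / (t + of_nat k) ^ i)"
    and "j \<in> {1..p-1}"
  shows "\<exists>S Z.
     volkenborn p (\<lambda>k. Rtilde p s n r (of_nat k + of_nat j / of_nat p)) (\<lambda>N. - S N) \<and>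
     (\<forall>i\<in>{2..p-1+s}. padic_hurwitz_zeta p i (of_nat j / of_nat p) (Z i)) \<and>
     padic_eq p S (\<lambda>N.
        (- (\<Sum>i=1..p-1+s. \<Sum>k=1..n. \<Sum>\<nu><k. r i k / (of_nat \<nu> + of_nat j / of_nat p) ^ i))
        + (\<Sum>i=2..p-1+s. (\<Sum>k=1..n. r i k) *
             (omega p (of_nat j / of_nat p) N) powi (1 - int i) * Z i N))"
proof -
  have pp: "prime p" by fact
  have p3: "p \<ge> 3" and p2: "p \<ge> 2" using assms(2) by auto
  have pj: "\<not> p dvd j"
  proof
    assume "p dvd j"
    moreover have "0 < j" "j < p" using assms(6) p2 by auto
    ultimately show False using dvd_imp_le by fastforce
  qed
  have sig: "(\<Sum>k=1..n. r 1 k) = 0"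
    by (rule res_zero[OF p2 ex_cond[OF p2 assms(3) assms(4)] pfd]) blast
  define Z where "Z = (\<lambda>i N. hw p j (i - 1) N / (of_nat i - 1))"
  define Csum where "Csum = (\<Sum>i=1..p-1+s. \<Sum>k=1..n. \<Sum>\<nu><k. r i k / (of_nat \<nu> + of_nat j / of_nat p) ^ i)"
  define S where "S = (\<lambda>N. (- Csum) + (\<Sum>i=2..p-1+s. (\<Sum>k=1..n. r i k) *
             (omega p (of_nat j / of_nat p) N) powi (1 - int i) * Z i N))"
  define G where "G = (\<lambda>i N. T p N (uu p j (i - 1)))"
  define cc where "cc = (\<lambda>i. (\<Sum>k=1..n. r i k) * (of_nat p ^ (i - 1) / (of_nat i - 1)))"
  have S_alt: "S N = - Csum + (\<Sum>i=2..p-1+s. cc i * G i N)" for N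
    unfolding S_def Z_def cc_def G_def using formula_rw[OF pp p3 pj, of "{2..p-1+s}"] by simp
  have Gpc: "pc p (G i)" if "i \<ge> 2" for i
  proof (rule pc_rate[OF pp, of 1])
    fix N N' :: nat assume "N \<le> N'"
    have "i - 1 \<ge> 1" using that by simp
    from G_cauchy[OF pp pj this \<open>N \<le> N'\<close>] show "Dp p (int N - 1) (G i N' - G i N)" unfolding G_def .
  qed
  have Spc: "pc p S"
  proof -
    have "pc p (\<lambda>N. (\<Sum>i=2..p-1+s. cc i * G i N))"
      by (rule pc_sum[OF pp]) (auto intro!: pc_cmult[OF pp] Gpc)
    then have "pc p (\<lambda>N. - Csum + (\<Sum>i=2..p-1+s. cc i * G i N))"
      by (rule pc_add[OF pp pc_const[OF pp]])
    moreover have "S = (\<lambda>N. - Csum + (\<Sum>i=2..p-1+s. cc i * G i N))" by (rule ext) (rule S_alt)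
    ultimately show ?thesis by simp
  qed
  have part2: "\<forall>i\<in>{2..p-1+s}. padic_hurwitz_zeta p i (of_nat j / of_nat p) (Z i)"
  proof
    fix i assume "i \<in> {2..p-1+s}"
    then have a1: "i - 1 \<ge> 1" and ia: "Suc (i - 1) = i" by auto
    have V: "volkenborn p (\<lambda>k N. (pangle p (of_nat k + of_nat j / of_nat p) N) powi (1 - int i)) (hw p j (i - 1))"
      using hur_volk[OF pp pj a1] ia by simp
    have pch: "pc p (hw p j (i - 1))" by (rule hw_pc[OF pp pj a1])
    have pcZ: "pc p (\<lambda>N. hw p j (i - 1) N / (of_nat i - 1))"
      using pc_cmult[OF pp pch, of "1 / (of_nat i - 1)"] by simp
    have "padic_eq p (Z i) (\<lambda>N. hw p j (i - 1) N / (of_nat i - 1))"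
      unfolding Z_def by (rule padic_eq_crit[OF pp pcZ pcZ]) (simp add: pnull_def Dp_zero[OF pp])
    then show "padic_hurwitz_zeta p i (of_nat j / of_nat p) (Z i)"
      unfolding padic_hurwitz_zeta_def using V by blast
  qed
  have part3: "padic_eq p S (\<lambda>N.
        (- (\<Sum>i=1..p-1+s. \<Sum>k=1..n. \<Sum>\<nu><k. r i k / (of_nat \<nu> + of_nat j / of_nat p) ^ i))
        + (\<Sum>i=2..p-1+s. (\<Sum>k=1..n. r i k) *
             (omega p (of_nat j / of_nat p) N) powi (1 - int i) * Z i N))"
  proof -
    have "padic_eq p S S" by (rule padic_eq_crit[OF pp Spc Spc]) (simp add: pnull_def Dp_zero[OF pp])
    then show ?thesis unfolding S_def Csum_def .
  qed
  have part1: "volkenborn p (\<lambda>k. Rtilde p s n r (of_nat k + of_nat j / of_nat p)) (\<lambda>N. - S N)"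
  proof (rule volkenborn_crit[OF pp])
    show "pc p (\<lambda>N. - S N)" by (rule pc_neg[OF pp Spc])
  next
    fix k
    have L: "pc p (\<lambda>N. Lam p j N m)" for m unfolding Lam_def by (rule LL_pc[OF pp p3 pj])
    have "pc p (\<lambda>N. \<Sum>k'=1..n. r 1 k' * Lam p j N (k + k'))"
      by (rule pc_sum[OF pp]) (auto intro: pc_cmult[OF pp] L)
    then have "pc p (\<lambda>N. (\<Sum>k'=1..n. r 1 k' * Lam p j N (k + k')) + (\<Sum>i=2..p-1+s. \<Sum>k'=1..n. r i k' * gi p j i (k + k')))"
      by (rule pc_add[OF pp _ pc_const[OF pp]])
    moreover have "Rtilde p s n r (of_nat k + of_nat j / of_nat p) =
       (\<lambda>N. (\<Sum>k'=1..n. r 1 k' * Lam p j N (k + k')) + (\<Sum>i=2..p-1+s. \<Sum>k'=1..n. r i k' * gi p j i (k + k')))"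
      by (rule ext) (rule Rtilde_rw[OF pp p3 pj])
    ultimately show "pc p (Rtilde p s n r (of_nat k + of_nat j / of_nat p))" by simp
  next
    fix E :: int
    obtain cr where cr: "cr \<le> 0" "\<forall>a\<in>{1..p-1+s} \<times> {1..n}. Dp p cr ((\<lambda>(i, k). r i k) a)"
      using unif_bound[OF pp, of "{1..p-1+s} \<times> {1..n}" "\<lambda>(i, k). r i k"] by blast
    obtain cq where cq: "cq \<le> 0" "\<forall>i\<in>{2..p-1+s}. Dp p cq (cc i)"
      using unif_bound[OF pp, of "{2..p-1+s}" cc] by blast
    define E' where "E' = E - cr - cq"
    have "\<forall>m\<ge>nat (E' + 1). \<forall>N\<ge>m + nat E'.
       Dp p E ((\<Sum>k<p ^ m. Rtilde p s n r (of_nat k + of_nat j / of_nat p) N) / of_nat p ^ m - - S N)"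
    proof (intro allI impI)
      fix m N assume m: "m \<ge> nat (E' + 1)" and N: "N \<ge> m + nat E'"
      let ?x = "of_nat j / of_nat p :: rat"
      define u where "u = (\<lambda>i (\<nu>::nat). 1 / (of_nat \<nu> + ?x) ^ i)"
      define D1 where "D1 = (\<lambda>\<nu>. (Lam p j N (p ^ m + \<nu>) - Lam p j N \<nu>) / of_nat p ^ m - u 1 \<nu>)"
      define Di where "Di = (\<lambda>i \<nu>. (gi p j i (p ^ m + \<nu>) - gi p j i \<nu>) / of_nat p ^ m - u i \<nu>)"
      define A1 where "A1 = (\<Sum>k'=1..n. r 1 k' * (\<Sum>\<nu><k'. D1 \<nu>))"
      define A2 where "A2 = (\<Sum>k'=1..n. r 1 k' * (\<Sum>\<nu><k'. u 1 \<nu>))"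
      define B1 where "B1 = (\<lambda>i. \<Sum>k'=1..n. r i k' * (\<Sum>\<nu><k'. Di i \<nu>))"
      define B2 where "B2 = (\<lambda>i. \<Sum>k'=1..n. r i k' * (\<Sum>\<nu><k'. u i \<nu>))"
      have shL: "T p m (\<lambda>k. Lam p j N (k + k')) = T p m (Lam p j N) + (\<Sum>\<nu><k'. D1 \<nu>) + (\<Sum>\<nu><k'. u 1 \<nu>)" for k'
      proof -
        have "(\<Sum>\<nu><k'. D1 \<nu>) + (\<Sum>\<nu><k'. u 1 \<nu>) = (\<Sum>\<nu><k'. D1 \<nu> + u 1 \<nu>)" by (rule sum.distrib[symmetric])
        also have "\<dots> = (\<Sum>\<nu><k'. (Lam p j N (p ^ m + \<nu>) - Lam p j N \<nu>) / of_nat p ^ m)" by (simp add: D1_def)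
        also have "\<dots> = (\<Sum>\<nu><k'. (Lam p j N (p ^ m + \<nu>) - Lam p j N \<nu>)) / of_nat p ^ m" by (rule sum_divide_distrib[symmetric])
        finally show ?thesis unfolding T_shift by simp
      qed
      have shG: "T p m (\<lambda>k. gi p j i (k + k')) = T p m (gi p j i) + (\<Sum>\<nu><k'. Di i \<nu>) + (\<Sum>\<nu><k'. u i \<nu>)" for i k'
      proof -
        have "(\<Sum>\<nu><k'. Di i \<nu>) + (\<Sum>\<nu><k'. u i \<nu>) = (\<Sum>\<nu><k'. Di i \<nu> + u i \<nu>)" by (rule sum.distrib[symmetric])
        also have "\<dots> = (\<Sum>\<nu><k'. (gi p j i (p ^ m + \<nu>) - gi p j i \<nu>) / of_nat p ^ m)" by (simp add: Di_def)
        also have "\<dots> = (\<Sum>\<nu><k'. (gi p j i (p ^ m + \<nu>) - gi p j i \<nu>)) / of_nat p ^ m" by (rule sum_divide_distrib[symmetric])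
        finally show ?thesis unfolding T_shift by simp
      qed
      have Tg: "T p m (gi p j i) = - (of_nat p ^ (i - 1) / (of_nat i - 1)) * G i m" if "i \<ge> 2" for i
      proof -
        have c1: "T p m (gi p j i) = (of_nat p ^ (i - 1) / (1 - of_nat i)) * G i m"
          unfolding G_def gi_uu[OF pp p3 pj] by (rule T_cmult')
        have c2: "(of_nat p ^ (i - 1) / (1 - of_nat i) :: rat) = - (of_nat p ^ (i - 1) / (of_nat i - 1))"
        proof -
          have "(1 - of_nat i :: rat) = - (of_nat i - 1)" by simp
          then show ?thesis by (simp only: divide_minus_right)
        qed
        show ?thesis by (rule trans[OF c1]) (simp only: c2)
      qed
      have TR: "(\<Sum>k<p ^ m. Rtilde p s n r (of_nat k + ?x) N) / of_nat p ^ m =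
         (\<Sum>k'=1..n. r 1 k' * T p m (\<lambda>k. Lam p j N (k + k'))) + (\<Sum>i=2..p-1+s. \<Sum>k'=1..n. r i k' * T p m (\<lambda>k. gi p j i (k + k')))"
      proof -
        have "(\<Sum>k<p ^ m. Rtilde p s n r (of_nat k + ?x) N) / of_nat p ^ m = T p m (\<lambda>k. Rtilde p s n r (of_nat k + ?x) N)"
          unfolding T_def ..
        also have "\<dots> = T p m (\<lambda>k. (\<Sum>k'=1..n. r 1 k' * Lam p j N (k + k')) + (\<Sum>i=2..p-1+s. \<Sum>k'=1..n. r i k' * gi p j i (k + k')))"
          unfolding Rtilde_rw[OF pp p3 pj] ..
        also have "\<dots> = (\<Sum>k'=1..n. r 1 k' * T p m (\<lambda>k. Lam p j N (k + k'))) + (\<Sum>i=2..p-1+s. \<Sum>k'=1..n. r i k' * T p m (\<lambda>k. gi p j i (k + k')))"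
          by (simp add: T_add' T_sum T_cmult')
        finally show ?thesis .
      qed
      have part_L: "(\<Sum>k'=1..n. r 1 k' * T p m (\<lambda>k. Lam p j N (k + k'))) = A1 + A2"
      proof -
        have "(\<Sum>k'=1..n. r 1 k' * T p m (\<lambda>k. Lam p j N (k + k'))) =
              (\<Sum>k'=1..n. r 1 k') * T p m (Lam p j N) + A1 + A2"
          unfolding shL A1_def A2_def by (simp add: algebra_simps sum.distrib sum_distrib_right sum_distrib_left)
        then show ?thesis using sig by simp
      qed
      have part_G: "(\<Sum>k'=1..n. r i k' * T p m (\<lambda>k. gi p j i (k + k'))) = - cc i * G i m + B1 i + B2 i"
        if "i \<ge> 2" for i
      proof -
        have "(\<Sum>k'=1..n. r i k' * T p m (\<lambda>k. gi p j i (k + k'))) =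
              (\<Sum>k'=1..n. r i k') * T p m (gi p j i) + B1 i + B2 i"
          unfolding shG B1_def B2_def by (simp add: algebra_simps sum.distrib sum_distrib_right sum_distrib_left)
        then show ?thesis unfolding Tg[OF that] cc_def by simp
      qed
      have Cs: "Csum = A2 + (\<Sum>i=2..p-1+s. B2 i)"
      proof -
        have one: "1 \<le> p - 1 + s" using p2 by simp
        have "Csum = (\<Sum>i=1..p-1+s. B2 i)"
          unfolding Csum_def B2_def u_def by (simp add: sum_distrib_left)
        also have "\<dots> = B2 1 + (\<Sum>i=2..p-1+s. B2 i)"
          using sum.atLeast_Suc_atMost[OF one, of B2] by (simp add: numeral_2_eq_2)
        finally show ?thesis unfolding A2_def B2_def by simp
      qed
      have key: "(\<Sum>k<p ^ m. Rtilde p s n r (of_nat k + ?x) N) / of_nat p ^ m - - S N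
          = A1 + (\<Sum>i=2..p-1+s. B1 i) + (\<Sum>i=2..p-1+s. cc i * (G i N - G i m))"
      proof -
        have "(\<Sum>i=2..p-1+s. \<Sum>k'=1..n. r i k' * T p m (\<lambda>k. gi p j i (k + k'))) =
              (\<Sum>i=2..p-1+s. - cc i * G i m + B1 i + B2 i)"
        proof (rule sum.cong[OF refl])
          fix i assume "i \<in> {2..p-1+s}"
          then have "i \<ge> 2" by simp
          then show "(\<Sum>k'=1..n. r i k' * T p m (\<lambda>k. gi p j i (k + k'))) = - cc i * G i m + B1 i + B2 i"
            by (rule part_G)
        qed
        then show ?thesis unfolding TR part_L S_alt Cs
          by (simp add: sum.distrib sum_subtractf right_diff_distrib algebra_simps)
      qed
      have E1: "E' \<le> int N + 1 - int m" and E2: "E' \<le> int m + 2" and E3: "E' \<le> int m - 1"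
        using m N by linarith+
      have dA1: "Dp p E A1" unfolding A1_def
      proof (intro Dp_sum[OF pp])
        fix k' assume k': "k' \<in> {1..n}"
        have dd: "Dp p E' (\<Sum>\<nu><k'. D1 \<nu>)"
          unfolding D1_def u_def by (intro Dp_sum[OF pp] Lam_deriv[OF pp p3 pj E1 E2]) auto
        have rr: "Dp p cr (r 1 k')" using cr k' p2 by auto
        have "Dp p (cr + E') (r 1 k' * (\<Sum>\<nu><k'. D1 \<nu>))" by (rule Dp_mult[OF pp rr dd])
        then show "Dp p E (r 1 k' * (\<Sum>\<nu><k'. D1 \<nu>))"
          using Dp_mono[OF pp, of E "cr + E'"] cq unfolding E'_def by simp
      qed auto
      have dB1: "Dp p E (\<Sum>i=2..p-1+s. B1 i)"
      proof (intro Dp_sum[OF pp])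
        fix i assume i: "i \<in> {2..p-1+s}"
        show "Dp p E (B1 i)" unfolding B1_def
        proof (intro Dp_sum[OF pp])
          fix k' assume k': "k' \<in> {1..n}"
          have dd: "Dp p E' (\<Sum>\<nu><k'. Di i \<nu>)"
            unfolding Di_def u_def
            by (intro Dp_sum[OF pp] Dp_mono[OF pp E2 gi_deriv[OF pp p3 pj]]) (use i in auto)
          have rr: "Dp p cr (r i k')" using cr k' i by auto
          have "Dp p (cr + E') (r i k' * (\<Sum>\<nu><k'. Di i \<nu>))" by (rule Dp_mult[OF pp rr dd])
          then show "Dp p E (r i k' * (\<Sum>\<nu><k'. Di i \<nu>))"
            using Dp_mono[OF pp, of E "cr + E'"] cq unfolding E'_def by simp
        qed auto
      qed auto
      have dC: "Dp p E (\<Sum>i=2..p-1+s. cc i * (G i N - G i m))"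
      proof (intro Dp_sum[OF pp])
        fix i assume i: "i \<in> {2..p-1+s}"
        then have a1: "i - 1 \<ge> 1" by auto
        have "m \<le> N" using N by simp
        from G_cauchy[OF pp pj a1 this] have "Dp p (int m - 1) (G i N - G i m)" unfolding G_def .
        then have dd: "Dp p E' (G i N - G i m)" using Dp_mono[OF pp E3] by blast
        have rr: "Dp p cq (cc i)" using cq i by auto
        have "Dp p (cq + E') (cc i * (G i N - G i m))" by (rule Dp_mult[OF pp rr dd])
        then show "Dp p E (cc i * (G i N - G i m))"
          using Dp_mono[OF pp, of E "cq + E'"] cr unfolding E'_def by simp
      qed auto
      show "Dp p E ((\<Sum>k<p ^ m. Rtilde p s n r (of_nat k + ?x) N) / of_nat p ^ m - - S N)"
        unfolding key by (intro Dp_add[OF pp] dA1 dB1 dC)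
    qed
    then show "\<exists>M. \<forall>m\<ge>M. \<exists>N0. \<forall>N\<ge>N0.
       Dp p E ((\<Sum>k<p ^ m. Rtilde p s n r (of_nat k + of_nat j / of_nat p) N) / of_nat p ^ m - - S N)"
      by blast
  qed
  show ?thesis using part1 part2 part3 by blast
qed


end
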